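(* Let $\mathbf{F}$ be a finite field with $q$ elements, let $A=\operatorname{diag}(J_{r_1}(0),\dots,J_{r_s}(0))$ with $r_1,\dots,r_s>0$ and $r_1+\dots+r_s=n$ (allowing $s=0$, $n=0$), let $\ell\ge0$, and set $A'=\operatorname{diag}(I_\ell,A)\in M_{\ell+n}(\mathbf{F})$. For $j\ge0$ let $e(A',j)$ be the number of semi-idempotent matrices $C$ obtained from $A'$ by replacing its last column by an arbitrary column such that $\mathrm{srk}\,C=j$, and for $i,j\ge0$ let $e(A',i,j)$ be the number of such $C$ with $\operatorname{rank} C=i$ and $\mathrm{srk}\,C=j$. Then (a) $e(A',\mathrm{srk}\,A')=q^{\mathrm{srk}\,A'}\,e(A',\mathrm{srk}\,A'+1)$; (b) if $s>0$ and $r_s>1$, then $e(A',\operatorname{rank}A',\mathrm{srk}\,A')=q^{\mathrm{srk}\,A'}\,e(A',\operatorname{rank}A',\mathrm{srk}\,A'+1)$.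
   Context: $J_\ell(0)$ is the lower $\ell\times\ell$ Jordan block with eigenvalue $0$ (ones directly below the diagonal). A square matrix $C$ is semi-idempotent if the space decomposes as $X\oplus Y$ into $C$-stable subspaces with $C|_X$ the identity and $C|_Y$ nilpotent. The stable rank $\mathrm{srk}\,C$ is the rank of $C^i$ for $i\gg0$ (so $\mathrm{srk}\,A'=\ell$). *)

theory Defs
  imports "Jordan_Normal_Form.DL_Rank"
begin

definition lower_jordan_zero :: "nat \<Rightarrow> 'a::{zero,one} mat" where
  "lower_jordan_zero k = mat k k (\<lambda>(i, j). if i = Suc j then 1 else 0)"

definition is_subspace :: "nat \<Rightarrow> 'a::field vec set \<Rightarrow> bool" where
  "is_subspace N U \<longleftrightarrow> U \<subseteq> carrier_vec N \<and> 0\<^sub>v N \<in> U \<and>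
     (\<forall>u\<in>U. \<forall>v\<in>U. u + v \<in> U) \<and> (\<forall>a. \<forall>u\<in>U. a \<cdot>\<^sub>v u \<in> U)"

definition semi_idempotent :: "nat \<Rightarrow> 'a::field mat \<Rightarrow> bool" where
  "semi_idempotent N C \<longleftrightarrow> C \<in> carrier_mat N N \<and>
     (\<exists>X Y. is_subspace N X \<and> is_subspace N Y \<and>
        (\<forall>v\<in>carrier_vec N. \<exists>!p. fst p \<in> X \<and> snd p \<in> Y \<and> v = fst p + snd p) \<and>
        (\<forall>x\<in>X. C *\<^sub>v x \<in> X) \<and> (\<forall>y\<in>Y. C *\<^sub>v y \<in> Y) \<and>
        (\<forall>x\<in>X. C *\<^sub>v x = x) \<and>
        (\<exists>k. \<forall>y\<in>Y. (C ^\<^sub>m k) *\<^sub>v y = 0\<^sub>v N))"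

abbreviation mrank :: "nat \<Rightarrow> 'a::field mat \<Rightarrow> nat" where
  "mrank N C \<equiv> vec_space.rank N C"

definition srk :: "nat \<Rightarrow> 'a::field mat \<Rightarrow> nat" where
  "srk N C = (THE r. \<exists>i0. \<forall>i\<ge>i0. mrank N (C ^\<^sub>m i) = r)"

definition A_prime :: "nat \<Rightarrow> nat list \<Rightarrow> 'a::field mat" where
  "A_prime l rs = diag_block_mat [1\<^sub>m l, diag_block_mat (map lower_jordan_zero rs)]"

definition last_col_repl :: "nat \<Rightarrow> 'a::field mat \<Rightarrow> 'a mat set" where
  "last_col_repl N B = {C \<in> carrier_mat N N. \<forall>i<N. \<forall>j<N. j \<noteq> N - 1 \<longrightarrow> C $$ (i, j) = B $$ (i, j)}"

definition e_count :: "nat \<Rightarrow> 'a::field mat \<Rightarrow> nat \<Rightarrow> nat" where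
  "e_count N B j = card {C \<in> last_col_repl N B. semi_idempotent N C \<and> srk N C = j}"

definition e_count2 :: "nat \<Rightarrow> 'a::field mat \<Rightarrow> nat \<Rightarrow> nat \<Rightarrow> nat" where
  "e_count2 N B i j = card {C \<in> last_col_repl N B. semi_idempotent N C \<and> mrank N C = i \<and> srk N C = j}"

end

theory Submission
  imports Defs "HOL-Library.FuncSet"
begin

fun isst :: "nat list \<Rightarrow> nat \<Rightarrow> bool" where
  "isst [] i = False"
| "isst (r # rs) i = (i = 0 \<or> (r \<le> i \<and> isst rs (i - r)))"

lemma isst_0: "rs \<noteq> [] \<Longrightarrow> isst rs 0"
  by (cases rs) auto

lemma lower_jordan_zero_dims[simp]:
  "dim_row (lower_jordan_zero r) = r" "dim_col (lower_jordan_zero r) = r"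
  by (auto simp: lower_jordan_zero_def)

lemma diag_jordan_entries:
  assumes "\<forall>r\<in>set rs. 0 < r"
  shows "dim_row (diag_block_mat (map lower_jordan_zero rs) :: 'a::{zero,one} mat) = sum_list rs \<and>
         dim_col (diag_block_mat (map lower_jordan_zero rs) :: 'a mat) = sum_list rs \<and>
    (\<forall>i j. i < sum_list rs \<longrightarrow> j < sum_list rs \<longrightarrow>
       (diag_block_mat (map lower_jordan_zero rs) :: 'a mat) $$ (i,j) = (if i = Suc j \<and> \<not> isst rs i then 1 else 0))"
  using assms
proof (induction rs)
  case Nil
  then show ?case by simp
next
  case (Cons r rs)
  let ?D = "diag_block_mat (map lower_jordan_zero rs) :: 'a mat"
  have r: "0 < r" using Cons.prems by simp
  from Cons.IH Cons.prems have IH: "dim_row ?D = sum_list rs" "dim_col ?D = sum_list rs"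
    "\<And>i j. i < sum_list rs \<Longrightarrow> j < sum_list rs \<Longrightarrow> ?D $$ (i,j) = (if i = Suc j \<and> \<not> isst rs i then 1 else 0)"
    by auto
  have "(diag_block_mat (map lower_jordan_zero (r # rs)) :: 'a mat) $$ (i,j) = (if i = Suc j \<and> \<not> isst (r # rs) i then 1 else 0)"
    if i: "i < r + sum_list rs" and j: "j < r + sum_list rs" for i j
  proof -
    have e: "(diag_block_mat (map lower_jordan_zero (r # rs)) :: 'a mat) $$ (i,j) =
      (if i < r then if j < r then (lower_jordan_zero r :: 'a mat) $$ (i, j) else 0
      else if j < r then 0 else ?D $$ (i - r, j - r))"
      using i j IH by (simp add: Let_def index_mat_four_block)
    show ?thesis
    proof (cases "i < r")
      case True
      then show ?thesis unfolding e using r by (auto simp: lower_jordan_zero_def)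
    next
      case False
      show ?thesis
      proof (cases "j < r")
        case True
        have "rs \<noteq> []" using False i by auto
        then have "isst rs 0" by (rule isst_0)
        then show ?thesis unfolding e using False True by auto
      next
        case jF: False
        show ?thesis unfolding e using False jF IH(3)[of "i - r" "j - r"] i j r Suc_diff_le[of r j]
          by auto
      qed
    qed
  qed
  then show ?case using IH by (simp add: Let_def)
qed

lemma isst_last:
  assumes "\<forall>r\<in>set rs. 0 < r" "rs \<noteq> []"
  shows "isst rs (sum_list rs - last rs) \<and> (\<forall>i. sum_list rs - last rs < i \<longrightarrow> i < sum_list rs \<longrightarrow> \<not> isst rs i)"
  using assms
proof (induction rs)
  case Nil
  then show ?case by simp
next
  case (Cons r rs)
  show ?case
  proof (cases "rs = []")
    case True
    then show ?thesis by auto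
  next
    case False
    have le: "last rs \<le> sum_list rs" using False by (simp add: member_le_sum_list)
    from Cons False have IH: "isst rs (sum_list rs - last rs)"
      "\<And>i. sum_list rs - last rs < i \<Longrightarrow> i < sum_list rs \<Longrightarrow> \<not> isst rs i" by auto
    have r: "0 < r" using Cons.prems by simp
    have "isst (r # rs) (r + sum_list rs - last rs)" using IH(1) le r by auto
    moreover have "\<not> isst (r # rs) i" if "r + sum_list rs - last rs < i" "i < r + sum_list rs" for i
      using IH(2)[of "i - r"] that le r by auto
    ultimately show ?thesis using False by auto
  qed
qed

lemma Ap_carrier: "\<forall>r\<in>set rs. 0 < r \<Longrightarrow> (A_prime l rs :: 'a::field mat) \<in> carrier_mat (l + sum_list rs) (l + sum_list rs)"
  using diag_jordan_entries[of rs, where 'a='a] unfolding A_prime_def by (auto simp: Let_def)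

lemma Ap_entry:
  assumes "\<forall>r\<in>set rs. 0 < r" "rs \<noteq> []" "i < l + sum_list rs" "j < l + sum_list rs"
  shows "(A_prime l rs :: 'a::field mat) $$ (i,j) =
    (if i < l then (if i = j then 1 else 0) else if i = Suc j \<and> \<not> isst rs (i - l) then 1 else 0)"
proof -
  note D = diag_jordan_entries[OF assms(1), where 'a='a]
  have i0: "isst rs 0" using assms(2) by (rule isst_0)
  show ?thesis
    unfolding A_prime_def using D assms(3,4) i0 Suc_diff_le[of l j]
    by (auto simp: Let_def index_mat_four_block)
qed

lemma pow_it:
  fixes C :: "'a::field mat"
  assumes C: "C \<in> carrier_mat n n" and v: "v \<in> carrier_vec n"
  shows "(C ^\<^sub>m k) *\<^sub>v v = ((\<lambda>w. C *\<^sub>v w) ^^ k) v"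
  using v
proof (induction k arbitrary: v)
  case 0
  then show ?case using C by simp
next
  case (Suc k)
  have "(C ^\<^sub>m Suc k) *\<^sub>v v = (C ^\<^sub>m k) *\<^sub>v (C *\<^sub>v v)"
    using C Suc.prems by (simp add: assoc_mult_mat_vec[of _ n n _ n])
  also have "\<dots> = ((\<lambda>w. C *\<^sub>v w) ^^ k) (C *\<^sub>v v)"
    using Suc.IH C Suc.prems by simp
  finally show ?case by (simp only: funpow_Suc_right o_apply)
qed

lemma it_carrier:
  fixes C :: "'a::field mat"
  assumes C: "C \<in> carrier_mat n n" and v: "v \<in> carrier_vec n"
  shows "((\<lambda>w. C *\<^sub>v w) ^^ k) v \<in> carrier_vec n"
  using pow_it[OF C v, where k=k, symmetric] mult_mat_vec_carrier[OF pow_carrier_mat[OF C] v] by simp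

lemma mat_vec_zero[simp]:
  fixes C :: "'a::field mat"
  shows "C \<in> carrier_mat n m \<Longrightarrow> C *\<^sub>v 0\<^sub>v m = 0\<^sub>v n"
  by (intro eq_vecI) (auto simp: scalar_prod_def)

lemma vec_add_diff':
  fixes a :: "'a::field vec"
  shows "a \<in> carrier_vec n \<Longrightarrow> b \<in> carrier_vec n \<Longrightarrow> a + (b - a) = b"
  by (intro eq_vecI) auto

lemma vec_add_diff2:
  fixes a :: "'a::field vec"
  shows "a \<in> carrier_vec n \<Longrightarrow> b \<in> carrier_vec n \<Longrightarrow> (a + b) - a = b"
  by (intro eq_vecI) auto

lemma smult_zero_vec'[simp]:
  "a \<cdot>\<^sub>v 0\<^sub>v n = (0\<^sub>v n :: 'a::field vec)"
  by (intro eq_vecI) auto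

lemma mat_eq_by_vec:
  fixes M :: "'a::field mat"
  assumes "M \<in> carrier_mat n n" "M' \<in> carrier_mat n n"
    and "\<And>v. v \<in> carrier_vec n \<Longrightarrow> M *\<^sub>v v = M' *\<^sub>v v"
  shows "M = M'"
proof (rule eq_matI)
  fix i j assume i: "i < dim_row M'" and j: "j < dim_col M'"
  have "M *\<^sub>v unit_vec n j = M' *\<^sub>v unit_vec n j" using assms(3) by simp
  then have "(M *\<^sub>v unit_vec n j) $ i = (M' *\<^sub>v unit_vec n j) $ i" by simp
  then show "M $$ (i, j) = M' $$ (i, j)" using assms(1,2) i j
    by (simp add: scalar_prod_def if_distrib[of "\<lambda>x. _ * x"] cong: if_cong)
qed (use assms in auto)

lemma it_fix:
  fixes C :: "'a::field mat"
  assumes "C *\<^sub>v x = x"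
  shows "((\<lambda>w. C *\<^sub>v w) ^^ j) x = x"
  by (induction j) (use assms in auto)

lemma it_stable:
  fixes C :: "'a::field mat"
  assumes "((\<lambda>w. C *\<^sub>v w) ^^ Suc k) v = ((\<lambda>w. C *\<^sub>v w) ^^ k) v"
  shows "((\<lambda>w. C *\<^sub>v w) ^^ (k + j)) v = ((\<lambda>w. C *\<^sub>v w) ^^ k) v"
proof (induction j)
  case 0 then show ?case by simp
next
  case (Suc j)
  have "((\<lambda>w. C *\<^sub>v w) ^^ (k + Suc j)) v = C *\<^sub>v (((\<lambda>w. C *\<^sub>v w) ^^ (k + j)) v)" by simp
  also have "\<dots> = C *\<^sub>v (((\<lambda>w. C *\<^sub>v w) ^^ k) v)" using Suc by simp
  also have "\<dots> = ((\<lambda>w. C *\<^sub>v w) ^^ Suc k) v" by simp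
  finally show ?case using assms by simp
qed

lemma semi_idem_iff:
  fixes C :: "'a::field mat"
  assumes C: "C \<in> carrier_mat n n"
  shows "semi_idempotent n C \<longleftrightarrow> (\<exists>k. C ^\<^sub>m Suc k = C ^\<^sub>m k)"
proof
  let ?T = "\<lambda>w. C *\<^sub>v w"
  assume "semi_idempotent n C"
  then obtain X Y k where sX: "is_subspace n X" and sY: "is_subspace n Y"
    and dec: "\<forall>v\<in>carrier_vec n. \<exists>!p. fst p \<in> X \<and> snd p \<in> Y \<and> v = fst p + snd p"
    and fixX: "\<forall>x\<in>X. C *\<^sub>v x = x" and nilY: "\<forall>y\<in>Y. (C ^\<^sub>m k) *\<^sub>v y = 0\<^sub>v n"
    unfolding semi_idempotent_def by blast
  have "C ^\<^sub>m Suc k = C ^\<^sub>m k"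
  proof (rule mat_eq_by_vec)
    fix v :: "'a vec" assume v: "v \<in> carrier_vec n"
    from dec v obtain q where q: "fst q \<in> X" "snd q \<in> Y" "v = fst q + snd q" by blast
    define x y where "x = fst q" and "y = snd q"
    have x: "x \<in> carrier_vec n" "x \<in> X" and y: "y \<in> carrier_vec n" "y \<in> Y"
      using q sX sY unfolding x_def y_def is_subspace_def by auto
    have vxy: "v = x + y" using q x_def y_def by simp
    have "(C ^\<^sub>m j) *\<^sub>v x = x" for j
      using pow_it[OF C x(1)] it_fix[of C x j] fixX x by simp
    note xx = this
    have yk: "(?T ^^ k) y = 0\<^sub>v n" by (metis nilY y(2) pow_it[OF C y(1)])
    have "(C ^\<^sub>m Suc k) *\<^sub>v y = (?T ^^ Suc k) y" by (rule pow_it[OF C y(1)])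
    also have "\<dots> = C *\<^sub>v ((?T ^^ k) y)" by simp
    also have "\<dots> = 0\<^sub>v n" using yk C by simp
    finally have y1: "(C ^\<^sub>m Suc k) *\<^sub>v y = 0\<^sub>v n" .
    have y0: "(C ^\<^sub>m k) *\<^sub>v y = 0\<^sub>v n" using nilY y by simp
    show "(C ^\<^sub>m Suc k) *\<^sub>v v = (C ^\<^sub>m k) *\<^sub>v v"
      unfolding vxy
      using xx y1 y0 by (metis mult_add_distrib_mat_vec[OF pow_carrier_mat[OF C] x(1) y(1)]
          mult_add_distrib_mat_vec[OF pow_carrier_mat[OF C] x(1) y(1), of "Suc k"])
  qed (use C in auto)
  then show "\<exists>k. C ^\<^sub>m Suc k = C ^\<^sub>m k" by blast
next
  let ?T = "\<lambda>w. C *\<^sub>v w"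
  assume "\<exists>k. C ^\<^sub>m Suc k = C ^\<^sub>m k"
  then obtain k where k: "C ^\<^sub>m Suc k = C ^\<^sub>m k" by blast
  define P where "P = C ^\<^sub>m k"
  have P: "P \<in> carrier_mat n n" unfolding P_def using C by simp
  have Pit: "P *\<^sub>v v = (?T ^^ k) v" if "v \<in> carrier_vec n" for v
    unfolding P_def using pow_it[OF C that] .
  have itS: "(?T ^^ Suc k) v = (?T ^^ k) v" if "v \<in> carrier_vec n" for v
  proof -
    have "(?T ^^ Suc k) v = (C ^\<^sub>m Suc k) *\<^sub>v v" by (rule pow_it[OF C that, symmetric])
    also have "\<dots> = (C ^\<^sub>m k) *\<^sub>v v" by (simp only: k)
    also have "\<dots> = (?T ^^ k) v" by (rule pow_it[OF C that])
    finally show ?thesis .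
  qed
  have CP: "C *\<^sub>v (P *\<^sub>v v) = P *\<^sub>v v" if v: "v \<in> carrier_vec n" for v
    using itS[OF v] Pit[OF v] by simp
  have PP: "P *\<^sub>v (P *\<^sub>v v) = P *\<^sub>v v" if v: "v \<in> carrier_vec n" for v
  proof -
    have "P *\<^sub>v (P *\<^sub>v v) = (?T ^^ k) ((?T ^^ k) v)"
      using Pit[OF v] Pit[of "P *\<^sub>v v"] P v it_carrier[OF C v, where k=k] by simp
    also have "\<dots> = (?T ^^ (k + k)) v" by (simp add: funpow_add)
    also have "\<dots> = (?T ^^ k) v" using it_stable[where C=C and k=k and v=v and j=k] itS[OF v] by simp
    finally show ?thesis using Pit[OF v] by simp
  qed
  define X where "X = {v \<in> carrier_vec n. C *\<^sub>v v = v}"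
  define Y where "Y = {v \<in> carrier_vec n. P *\<^sub>v v = 0\<^sub>v n}"
  have sX: "is_subspace n X"
    unfolding is_subspace_def
  proof (intro conjI ballI allI)
    show "X \<subseteq> carrier_vec n" unfolding X_def by blast
    show "0\<^sub>v n \<in> X" unfolding X_def using C by simp
    fix u v assume u: "u \<in> X" and v: "v \<in> X"
    then show "u + v \<in> X" unfolding X_def
      using mult_add_distrib_mat_vec[OF C, of u v] by simp
  next
    fix a u assume u: "u \<in> X"
    then show "a \<cdot>\<^sub>v u \<in> X" unfolding X_def
      using mult_mat_vec[OF C, of u a] by simp
  qed
  have sY: "is_subspace n Y"
    unfolding is_subspace_def
  proof (intro conjI ballI allI)
    show "Y \<subseteq> carrier_vec n" unfolding Y_def by blast
    show "0\<^sub>v n \<in> Y" unfolding Y_def using P by simp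
    fix u v assume u: "u \<in> Y" and v: "v \<in> Y"
    then show "u + v \<in> Y" unfolding Y_def
      using mult_add_distrib_mat_vec[OF P, of u v] by simp
  next
    fix a u assume u: "u \<in> Y"
    then show "a \<cdot>\<^sub>v u \<in> Y" unfolding Y_def
      using mult_mat_vec[OF P, of u a] by simp
  qed
  have dec: "\<exists>!q. fst q \<in> X \<and> snd q \<in> Y \<and> v = fst q + snd q" if v: "v \<in> carrier_vec n" for v
  proof
    have Pv: "P *\<^sub>v v \<in> carrier_vec n" using P v by simp
    have "P *\<^sub>v (v - P *\<^sub>v v) = P *\<^sub>v v - P *\<^sub>v (P *\<^sub>v v)"
      using mult_minus_distrib_mat_vec[OF P v Pv] .
    also have "\<dots> = 0\<^sub>v n" using PP[OF v] Pv by simp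
    finally have "P *\<^sub>v (v - P *\<^sub>v v) = 0\<^sub>v n" .
    then show "fst (P *\<^sub>v v, v - P *\<^sub>v v) \<in> X \<and> snd (P *\<^sub>v v, v - P *\<^sub>v v) \<in> Y \<and>
      v = fst (P *\<^sub>v v, v - P *\<^sub>v v) + snd (P *\<^sub>v v, v - P *\<^sub>v v)"
      unfolding X_def Y_def using CP[OF v] Pv v vec_add_diff'[OF Pv v] by auto
  next
    fix q assume q: "fst q \<in> X \<and> snd q \<in> Y \<and> v = fst q + snd q"
    have x: "fst q \<in> carrier_vec n" "C *\<^sub>v fst q = fst q" using q X_def by auto
    have y: "snd q \<in> carrier_vec n" "P *\<^sub>v snd q = 0\<^sub>v n" using q Y_def by auto
    have Px: "P *\<^sub>v fst q = fst q" using Pit[OF x(1)] it_fix[of C "fst q" k] x(2) by simp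
    have "P *\<^sub>v v = fst q"
      using q mult_add_distrib_mat_vec[OF P x(1) y(1)] Px y(2) x(1) by simp
    moreover have "snd q = v - fst q" using q vec_add_diff2[OF x(1) y(1)] by simp
    ultimately show "q = (P *\<^sub>v v, v - P *\<^sub>v v)" by (metis prod.collapse)
  qed
  have stX: "\<forall>x\<in>X. C *\<^sub>v x \<in> X" unfolding X_def by auto
  have stY: "\<forall>y\<in>Y. C *\<^sub>v y \<in> Y"
  proof
    fix y assume y: "y \<in> Y"
    then have yc: "y \<in> carrier_vec n" and y0: "P *\<^sub>v y = 0\<^sub>v n" unfolding Y_def by auto
    have Cy: "C *\<^sub>v y \<in> carrier_vec n" using C yc by simp
    have "P *\<^sub>v (C *\<^sub>v y) = (?T ^^ Suc k) y" using Pit[OF Cy] by (simp only: funpow_Suc_right o_apply)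
    also have "\<dots> = C *\<^sub>v (P *\<^sub>v y)" using Pit[OF yc] by simp
    also have "\<dots> = 0\<^sub>v n" using y0 C by simp
    finally show "C *\<^sub>v y \<in> Y" unfolding Y_def using Cy by simp
  qed
  have nil: "\<exists>k'. \<forall>y\<in>Y. (C ^\<^sub>m k') *\<^sub>v y = 0\<^sub>v n" unfolding Y_def P_def by blast
  have fx: "\<forall>x\<in>X. C *\<^sub>v x = x" unfolding X_def by blast
  have dec': "\<forall>v\<in>carrier_vec n. \<exists>!q. fst q \<in> X \<and> snd q \<in> Y \<and> v = fst q + snd q"
    using dec by blast
  show "semi_idempotent n C"
    unfolding semi_idempotent_def
  proof (intro conjI exI)
    show "C \<in> carrier_mat n n" by (rule C)
    show "is_subspace n X" by (rule sX)
    show "is_subspace n Y" by (rule sY)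
    show "\<forall>y\<in>Y. C ^\<^sub>m k *\<^sub>v y = 0\<^sub>v n" unfolding Y_def P_def by blast
    show "\<forall>v\<in>carrier_vec n. \<exists>!q. fst q \<in> X \<and> snd q \<in> Y \<and> v = fst q + snd q" by (rule dec')
    show "\<forall>x\<in>X. C *\<^sub>v x \<in> X" by (rule stX)
    show "\<forall>y\<in>Y. C *\<^sub>v y \<in> Y" by (rule stY)
    show "\<forall>x\<in>X. C *\<^sub>v x = x" by (rule fx)
  qed
qed

lemma pow_stable:
  fixes C :: "'a::field mat"
  assumes C: "C \<in> carrier_mat n n" and k: "C ^\<^sub>m Suc k = C ^\<^sub>m k"
  shows "i \<ge> k \<Longrightarrow> C ^\<^sub>m i = C ^\<^sub>m k"
proof (induction i rule: dec_induct)
  case base then show ?case by simp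
next
  case (step i)
  have "C ^\<^sub>m Suc i = C ^\<^sub>m i * C" by (rule pow_mat.simps(2))
  also have "\<dots> = C ^\<^sub>m k * C" using step(3) by (rule arg_cong)
  also have "\<dots> = C ^\<^sub>m Suc k" by (rule pow_mat.simps(2)[symmetric])
  finally show ?case using k by (rule trans)
qed

lemma srk_eq:
  fixes C :: "'a::field mat"
  assumes C: "C \<in> carrier_mat n n" and k: "C ^\<^sub>m Suc k = C ^\<^sub>m k"
  shows "srk n C = mrank n (C ^\<^sub>m k)"
  unfolding srk_def
proof (rule the_equality)
  show "\<exists>i0. \<forall>i\<ge>i0. mrank n (C ^\<^sub>m i) = mrank n (C ^\<^sub>m k)"
  proof (intro exI allI impI)
    fix i assume "k \<le> i"
    then have "C ^\<^sub>m i = C ^\<^sub>m k" by (rule pow_stable[OF C k])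
    then show "mrank n (C ^\<^sub>m i) = mrank n (C ^\<^sub>m k)" by (rule arg_cong)
  qed
next
  fix r assume "\<exists>i0. \<forall>i\<ge>i0. mrank n (C ^\<^sub>m i) = r"
  then obtain i0 where "\<forall>i\<ge>i0. mrank n (C ^\<^sub>m i) = r" by blast
  then have "mrank n (C ^\<^sub>m (max i0 k)) = r" by (meson max.cobounded1)
  moreover have "C ^\<^sub>m (max i0 k) = C ^\<^sub>m k" by (rule pow_stable[OF C k]) (rule max.cobounded2)
  ultimately show "r = mrank n (C ^\<^sub>m k)" by metis
qed

lemma sum_single:
  assumes "finite A" "\<And>y. y \<in> A \<Longrightarrow> y \<noteq> z \<Longrightarrow> f y = 0"
  shows "sum f A = (if z \<in> A then f z else (0::'b::comm_monoid_add))"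
proof (cases "z \<in> A")
  case True
  have "sum f A = f z + sum f (A - {z})" using sum.remove[OF assms(1) True] .
  also have "sum f (A - {z}) = 0" using assms(2) by (intro sum.neutral) auto
  finally show ?thesis using True by simp
next
  case False
  then show ?thesis using assms(2) by (auto intro: sum.neutral)
qed

context vec_space
begin

lemma rank_eq_card_span:
  assumes M: "M \<in> carrier_mat n nc" and S: "S \<subseteq> carrier_vec n" "finite S" "lin_indpt S"
    and sub1: "set (cols M) \<subseteq> span S" and sub2: "S \<subseteq> span (set (cols M))"
  shows "rank M = card S"
proof -
  have cM: "set (cols M) \<subseteq> carrier_vec n" using M cols_dim by blast
  have "span (set (cols M)) \<subseteq> span S" using span_is_subset[OF sub1 span_is_submodule[OF S(1)]] .
  moreover have "span S \<subseteq> span (set (cols M))" using span_is_subset[OF sub2 span_is_submodule[OF cM]] .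
  ultimately have eq: "span (set (cols M)) = span S" by blast
  have "maximal S (\<lambda>T. T \<subseteq> S \<and> lin_indpt T)" unfolding maximal_def using S by blast
  from dim_span[OF S(1) S(2) this] show ?thesis unfolding rank_def eq by simp
qed

lemma unit_span:
  assumes I: "I \<subseteq> {..<n}" and v: "v \<in> carrier_vec n" and z: "\<forall>i<n. i \<notin> I \<longrightarrow> v $ i = 0"
  shows "v \<in> span (unit_vec n ` I)"
proof -
  let ?U = "unit_vec n ` I"
  have finI: "finite I" using I finite_subset by blast
  then have fin: "finite ?U" by simp
  have U: "?U \<subseteq> carrier_vec n" by auto
  have inj: "inj_on (unit_vec n) I" using I unfolding inj_on_def by auto
  define a where "a = (\<lambda>y. v \<bullet> y)"
  have "lincomb a ?U = v"
  proof (rule eq_vecI)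
    have "lincomb a ?U \<in> carrier_vec n" using lincomb_closed[OF U] by auto
    then show "dim_vec (lincomb a ?U) = dim_vec v" using v by simp
    fix i assume "i < dim_vec v"
    then have i: "i < n" using v by simp
    have "lincomb a ?U $ i = (\<Sum>y\<in>?U. a y * y $ i)" by (rule lincomb_index[OF i U])
    also have "\<dots> = (\<Sum>j\<in>I. a (unit_vec n j) * unit_vec n j $ i)"
      by (rule sum.reindex[OF inj, unfolded o_def])
    also have "\<dots> = (\<Sum>j\<in>I. (if j = i then v $ i else 0))"
      by (rule sum.cong) (use I v i in \<open>auto simp: a_def\<close>)
    also have "\<dots> = v $ i" using finI z i by (simp add: sum.delta')
    finally show "lincomb a ?U $ i = v $ i" .
  qed
  then show ?thesis unfolding span_def using fin by blast
qed

lemma span_add_closed: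
  assumes S: "S \<subseteq> carrier_vec n" and "a \<in> span S" "b \<in> span S"
  shows "a + b \<in> span S"
  using LinearCombinations.submodule.m_closed[OF span_is_submodule[OF S] assms(2,3)] by simp

lemma span_smult_closed:
  assumes S: "S \<subseteq> carrier_vec n" and "b \<in> span S"
  shows "c \<cdot>\<^sub>v b \<in> span S"
  using LinearCombinations.submodule.smult_closed[OF span_is_submodule[OF S], of c b] assms(2) by simp

lemma unit_lin_indpt:
  assumes I: "I \<subseteq> {..<n}" and x: "x \<in> carrier_vec n" and j: "j < n" "j \<notin> I" "x $ j \<noteq> 0"
  shows "lin_indpt (insert x (unit_vec n ` I))"
proof
  assume "lin_dep (insert x (unit_vec n ` I))"
  then obtain A a v where A: "finite A" "A \<subseteq> insert x (unit_vec n ` I)"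
    and lc: "lincomb a A = 0\<^sub>v n" and v: "v \<in> A" "a v \<noteq> 0"
    unfolding lin_dep_def by blast
  have Ac: "A \<subseteq> carrier_vec n" using A x by auto
  have coord: "(\<Sum>y\<in>A. a y * y $ k) = 0" if "k < n" for k
    using lincomb_index[OF that Ac, of a] lc that by simp
  have xnot: "x \<notin> unit_vec n ` I"
  proof
    assume "x \<in> unit_vec n ` I"
    then obtain i where i: "i \<in> I" "x = unit_vec n i" by blast
    then have "i \<noteq> j" "i < n" using j I by auto
    then have "x $ j = 0" using i j by simp
    with j(3) show False by simp
  qed
  have ax: "a x = 0" if xA: "x \<in> A"
  proof -
    have "(\<Sum>y\<in>A. a y * y $ j) = (if x \<in> A then a x * x $ j else 0)"
    proof (rule sum_single[OF A(1)])
      fix y assume y: "y \<in> A" "y \<noteq> x"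
      then obtain i where i: "i \<in> I" "y = unit_vec n i" using A(2) by blast
      moreover have "i \<noteq> j" "i < n" using i I j by auto
      ultimately show "a y * y $ j = 0" using j by simp
    qed
    then have "(\<Sum>y\<in>A. a y * y $ j) = a x * x $ j" using xA by simp
    then show ?thesis using coord[OF j(1)] j(3) by simp
  qed
  show False
  proof (cases "v = x")
    case True
    then show ?thesis using ax v by simp
  next
    case False
    then obtain i where i: "i \<in> I" "v = unit_vec n i" using v A by auto
    have iN: "i < n" using i I by auto
    have "(\<Sum>y\<in>A. a y * y $ i) = a v * v $ i"
    proof (rule sum_single[OF A(1), of v "\<lambda>y. a y * y $ i", simplified v(1) if_True])
      fix y assume y: "y \<in> A" "y \<noteq> v"
      show "a y * y $ i = 0"
      proof (cases "y = x")
        case True then show ?thesis using ax y by simp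
      next
        case False
        then obtain i' where "i' \<in> I" "y = unit_vec n i'" using y A by auto
        then show ?thesis using y i iN I by auto
      qed
    qed
    then show False using coord[OF iN] v i iN by simp
  qed
qed

lemma unit_lin_indpt':
  assumes I: "I \<subseteq> {..<n}" and "n > 0" "\<exists>j<n. j \<notin> I"
  shows "lin_indpt (unit_vec n ` I)"
proof -
  obtain j where j: "j < n" "j \<notin> I" using assms by blast
  have "lin_indpt (insert (unit_vec n j) (unit_vec n ` I))"
    by (rule unit_lin_indpt[OF I]) (use j in auto)
  then show ?thesis by (rule subset_li_is_li) auto
qed

end

locale LC =
  fixes l :: nat and rs :: "nat list" and C :: "'a::field mat"
  assumes pos: "\<forall>r\<in>set rs. 0 < r" and ne: "rs \<noteq> []"
    and Cl: "C \<in> last_col_repl (l + sum_list rs) (A_prime l rs)"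
begin

abbreviation "N \<equiv> l + sum_list rs"
abbreviation "p \<equiv> l + sum_list rs - last rs"
definition "c = col C (N - 1)"
definition sh :: "'a vec \<Rightarrow> nat \<Rightarrow> 'a" where
  "sh v i = (if i < l then v $ i else if isst rs (i - l) then 0 else v $ (i - 1))"

lemma last_pos: "0 < last rs" using pos last_in_set[OF ne] by blast
lemma last_le: "last rs \<le> sum_list rs" by (rule member_le_sum_list[OF last_in_set[OF ne]]) simp
lemma lp: "l \<le> p" using last_le by linarith
lemma pN: "p < N" using last_le last_pos by linarith
lemma lN: "l \<le> N - 1" using pN lp by linarith
lemma pl: "p - l = sum_list rs - last rs" using last_le by linarith
lemma isst_p: "isst rs (p - l)"
  unfolding pl using isst_last[OF pos ne] by (rule conjunct1)
lemma notst: assumes "p < i" "i < N" shows "\<not> isst rs (i - l)"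
proof -
  have "sum_list rs - last rs < i - l" "i - l < sum_list rs" using assms last_le by linarith+
  then show ?thesis using isst_last[OF pos ne] by blast
qed
lemma st_l: "isst rs 0" using ne by (rule isst_0)

lemma C_carrier: "C \<in> carrier_mat N N" using Cl unfolding last_col_repl_def by simp

lemma C_entry:
  assumes i: "i < N" and j: "j < N"
  shows "C $$ (i,j) = (if j = N - 1 then c $ i else
    (if i < l then (if i = j then 1 else 0) else if i = Suc j \<and> \<not> isst rs (i - l) then 1 else 0))"
proof (cases "j = N - 1")
  case True
  then show ?thesis unfolding c_def using i C_carrier by simp
next
  case False
  then have "C $$ (i,j) = (A_prime l rs :: 'a mat) $$ (i,j)" using Cl i j unfolding last_col_repl_def by auto
  then show ?thesis using Ap_entry[OF pos ne i j] False by simp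
qed

lemma Cv:
  assumes v: "v \<in> carrier_vec N" and i: "i < N"
  shows "(C *\<^sub>v v) $ i = sh v i + c $ i * v $ (N - 1)"
proof -
  have i0: "\<not> i < l \<Longrightarrow> \<not> isst rs (i - l) \<Longrightarrow> 0 < i" using st_l by (cases i) auto
  have "(C *\<^sub>v v) $ i = (\<Sum>j\<in>{0..<N}. C $$ (i,j) * v $ j)"
    using C_carrier v i by (simp add: scalar_prod_def)
  also have "\<dots> = (\<Sum>j\<in>{0..<N}. (if j = N - 1 then c $ i * v $ (N - 1) else 0)
      + (if i < l then (if j = i then v $ i else 0) else if j = i - 1 \<and> 0 < i \<and> \<not> isst rs (i - l) then v $ j else 0))"
  proof (rule sum.cong[OF refl])
    fix j assume "j \<in> {0..<N}"
    then have j: "j < N" by simp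
    have ne1: "\<not> (i = Suc (N - 1))" using i by simp
    show "C $$ (i,j) * v $ j = (if j = N - 1 then c $ i * v $ (N - 1) else 0)
      + (if i < l then (if j = i then v $ i else 0) else if j = i - 1 \<and> 0 < i \<and> \<not> isst rs (i - l) then v $ j else 0)"
      unfolding C_entry[OF i j] using i j lN ne1 by (cases "j = N - 1"; cases "i < l") auto
  qed
  also have "\<dots> = c $ i * v $ (N - 1) + sh v i"
    unfolding sum.distrib using i lN i0
    by (cases "i < l"; cases "isst rs (i - l)") (simp_all add: sh_def sum.delta)
  finally show ?thesis by (rule trans[OF _ add.commute])
qed

end

lemma itS_of_mat:
  fixes C :: "'a::field mat"
  assumes C: "C \<in> carrier_mat n n" and k: "C ^\<^sub>m Suc k = C ^\<^sub>m k" and v: "v \<in> carrier_vec n"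
  shows "((\<lambda>w. C *\<^sub>v w) ^^ Suc k) v = ((\<lambda>w. C *\<^sub>v w) ^^ k) v"
proof -
  have "((\<lambda>w. C *\<^sub>v w) ^^ Suc k) v = (C ^\<^sub>m Suc k) *\<^sub>v v" by (rule pow_it[OF C v, symmetric])
  also have "\<dots> = (C ^\<^sub>m k) *\<^sub>v v" by (simp only: k)
  also have "\<dots> = ((\<lambda>w. C *\<^sub>v w) ^^ k) v" by (rule pow_it[OF C v])
  finally show ?thesis .
qed

lemma mat_of_itS:
  fixes C :: "'a::field mat"
  assumes C: "C \<in> carrier_mat n n"
    and h: "\<And>v. v \<in> carrier_vec n \<Longrightarrow> ((\<lambda>w. C *\<^sub>v w) ^^ Suc k) v = ((\<lambda>w. C *\<^sub>v w) ^^ k) v"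
  shows "C ^\<^sub>m Suc k = C ^\<^sub>m k"
proof (rule mat_eq_by_vec)
  fix v :: "'a vec" assume v: "v \<in> carrier_vec n"
  show "(C ^\<^sub>m Suc k) *\<^sub>v v = (C ^\<^sub>m k) *\<^sub>v v"
    using pow_it[OF C v, of "Suc k"] pow_it[OF C v, of k] h[OF v] by simp
qed (rule pow_carrier_mat[OF C])+

lemma it_minus:
  fixes C :: "'a::field mat"
  assumes C: "C \<in> carrier_mat n n" and a: "a \<in> carrier_vec n" and b: "b \<in> carrier_vec n"
  shows "((\<lambda>w. C *\<^sub>v w) ^^ m) (a - b) = ((\<lambda>w. C *\<^sub>v w) ^^ m) a - ((\<lambda>w. C *\<^sub>v w) ^^ m) b"
proof -
  have ab: "a - b \<in> carrier_vec n" using a b by simp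
  have "((\<lambda>w. C *\<^sub>v w) ^^ m) (a - b) = (C ^\<^sub>m m) *\<^sub>v (a - b)" by (rule pow_it[OF C ab, symmetric])
  also have "\<dots> = (C ^\<^sub>m m) *\<^sub>v a - (C ^\<^sub>m m) *\<^sub>v b"
    by (rule mult_minus_distrib_mat_vec[OF pow_carrier_mat[OF C] a b])
  also have "\<dots> = ((\<lambda>w. C *\<^sub>v w) ^^ m) a - ((\<lambda>w. C *\<^sub>v w) ^^ m) b"
    using pow_it[OF C a, of m] pow_it[OF C b, of m] by simp
  finally show ?thesis .
qed

context LC
begin

abbreviation T where "T \<equiv> (\<lambda>w. C *\<^sub>v w)"

lemma T_car: "v \<in> carrier_vec N \<Longrightarrow> C *\<^sub>v v \<in> carrier_vec N"
  using C_carrier by simp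

lemma it_car: "v \<in> carrier_vec N \<Longrightarrow> (T ^^ m) v \<in> carrier_vec N"
  by (rule it_carrier[OF C_carrier])

lemma N1: "N - 1 < N" using pN by linarith

lemma top_fix:
  assumes v: "v \<in> carrier_vec N" and z: "\<forall>i. l \<le> i \<longrightarrow> i < N \<longrightarrow> v $ i = 0"
  shows "C *\<^sub>v v = v"
proof (rule eq_vecI)
  show "dim_vec (C *\<^sub>v v) = dim_vec v" using v C_carrier by simp
  fix i assume "i < dim_vec v"
  then have i: "i < N" using v by simp
  have vN: "v $ (N - 1) = 0" using z lN N1 by blast
  show "(C *\<^sub>v v) $ i = v $ i"
  proof (cases "i < l")
    case True then show ?thesis unfolding Cv[OF v i] sh_def using vN by simp
  next
    case False
    show ?thesis
    proof (cases "isst rs (i - l)")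
      case True then show ?thesis unfolding Cv[OF v i] sh_def using vN False z i by simp
    next
      case nst: False
      then have "i \<noteq> l" using st_l by auto
      then have "v $ (i - 1) = 0" "v $ i = 0" using z False i by auto
      then show ?thesis unfolding Cv[OF v i] sh_def using vN False nst by simp
    qed
  qed
qed

lemma fix0:
  assumes v: "v \<in> carrier_vec N" and Tv: "C *\<^sub>v v = v" and z: "v $ (N - 1) = 0"
  shows "\<forall>i. l \<le> i \<longrightarrow> i < N \<longrightarrow> v $ i = 0"
proof (intro allI impI)
  fix i assume "l \<le> i" "i < N"
  then show "v $ i = 0"
  proof (induction i rule: less_induct)
    case (less i)
    have "v $ i = (C *\<^sub>v v) $ i" using Tv by simp
    also have "\<dots> = sh v i" unfolding Cv[OF v less.prems(2)] z by simp
    finally have e: "v $ i = sh v i" .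
    show ?case
    proof (cases "isst rs (i - l)")
      case True then show ?thesis using e less.prems unfolding sh_def by simp
    next
      case False
      then have "i \<noteq> l" using st_l by auto
      then have "v $ (i - 1) = 0" using less.IH[of "i - 1"] less.prems by simp
      then show ?thesis using e less.prems False unfolding sh_def by simp
    qed
  qed
qed

lemma nil:
  assumes G0: "\<forall>i. p \<le> i \<longrightarrow> i < N - 1 \<longrightarrow> c $ i = 0"
    and y: "y \<in> carrier_vec N" and yz: "\<forall>i. p \<le> i \<longrightarrow> i < N \<longrightarrow> y $ i = 0"
  shows "(\<forall>i. p \<le> i \<longrightarrow> i < N \<longrightarrow> (T ^^ m) y $ i = 0) \<and> (\<forall>i<l. (T ^^ m) y $ i = y $ i)
    \<and> (\<forall>i. l \<le> i \<longrightarrow> i < p \<longrightarrow> i - l < m \<longrightarrow> (T ^^ m) y $ i = 0)"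
proof (induction m)
  case 0
  then show ?case using yz by simp
next
  case (Suc m)
  define w where "w = (T ^^ m) y"
  have w: "w \<in> carrier_vec N" unfolding w_def by (rule it_car[OF y])
  have IH1: "\<And>i. p \<le> i \<Longrightarrow> i < N \<Longrightarrow> w $ i = 0" and IH2: "\<And>i. i < l \<Longrightarrow> w $ i = y $ i"
    and IH3: "\<And>i. l \<le> i \<Longrightarrow> i < p \<Longrightarrow> i - l < m \<Longrightarrow> w $ i = 0"
    using Suc.IH unfolding w_def by auto
  have wN: "w $ (N - 1) = 0" using IH1 lN pN N1 by simp
  have step: "(T ^^ Suc m) y = C *\<^sub>v w" unfolding w_def by simp
  have Ci: "(C *\<^sub>v w) $ i = sh w i" if "i < N" for i using Cv[OF w that] wN by simp
  have A: "(C *\<^sub>v w) $ i = 0" if i: "p \<le> i" "i < N" for i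
  proof -
    have "\<not> i < l" using i lp by simp
    moreover have "\<not> isst rs (i - l) \<Longrightarrow> w $ (i - 1) = 0"
    proof -
      assume "\<not> isst rs (i - l)"
      then have "i \<noteq> p" using isst_p by auto
      then show "w $ (i - 1) = 0" using IH1 i by simp
    qed
    ultimately show ?thesis using Ci[OF i(2)] unfolding sh_def by auto
  qed
  have B: "(C *\<^sub>v w) $ i = y $ i" if i: "i < l" for i
    using Ci[of i] i lN N1 IH2[OF i] unfolding sh_def by simp
  have Cc: "(C *\<^sub>v w) $ i = 0" if i: "l \<le> i" "i < p" "i - l < Suc m" for i
  proof -
    have iN: "i < N" using i pN by simp
    have "\<not> i < l" using i by simp
    moreover have "\<not> isst rs (i - l) \<Longrightarrow> w $ (i - 1) = 0"
    proof -
      assume "\<not> isst rs (i - l)"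
      then have "i \<noteq> l" using st_l by auto
      then show "w $ (i - 1) = 0" using IH3[of "i - 1"] i by simp
    qed
    ultimately show ?thesis using Ci[OF iN] unfolding sh_def by auto
  qed
  show ?case unfolding step using A B Cc by blast
qed

lemma nil_full:
  assumes G0: "\<forall>i. p \<le> i \<longrightarrow> i < N - 1 \<longrightarrow> c $ i = 0"
    and y: "y \<in> carrier_vec N" and yz: "\<forall>i. p \<le> i \<longrightarrow> i < N \<longrightarrow> y $ i = 0"
  shows "(\<forall>i. l \<le> i \<longrightarrow> i < N \<longrightarrow> (T ^^ sum_list rs) y $ i = 0) \<and> (\<forall>i<l. (T ^^ sum_list rs) y $ i = y $ i)"
proof -
  note n = nil[OF G0 y yz, of "sum_list rs"]
  have "(T ^^ sum_list rs) y $ i = 0" if "l \<le> i" "i < N" for i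
  proof (cases "p \<le> i")
    case True then show ?thesis using n that by blast
  next
    case False
    then have "i - l < sum_list rs" using that last_pos by linarith
    then show ?thesis using n that False by auto
  qed
  then show ?thesis using n by blast
qed

end

context LC
begin

lemma s0_decay:
  assumes c0: "\<forall>i. p \<le> i \<longrightarrow> i < N \<longrightarrow> c $ i = 0" and v: "v \<in> carrier_vec N"
  shows "\<forall>i. p \<le> i \<longrightarrow> i < N \<longrightarrow> i - p < m \<longrightarrow> (T ^^ m) v $ i = 0"
proof (induction m)
  case 0 then show ?case by simp
next
  case (Suc m)
  define w where "w = (T ^^ m) v"
  have w: "w \<in> carrier_vec N" unfolding w_def by (rule it_car[OF v])
  have IH: "\<And>i. p \<le> i \<Longrightarrow> i < N \<Longrightarrow> i - p < m \<Longrightarrow> w $ i = 0" using Suc.IH unfolding w_def by auto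
  have "(C *\<^sub>v w) $ i = 0" if i: "p \<le> i" "i < N" "i - p < Suc m" for i
  proof -
    have e: "(C *\<^sub>v w) $ i = sh w i" using Cv[OF w i(2)] c0 i by simp
    have "\<not> i < l" using i lp by simp
    moreover have "\<not> isst rs (i - l) \<Longrightarrow> w $ (i - 1) = 0"
    proof -
      assume "\<not> isst rs (i - l)"
      then have "i \<noteq> p" using isst_p by auto
      then show "w $ (i - 1) = 0" using IH[of "i - 1"] i by simp
    qed
    ultimately show ?thesis using e unfolding sh_def by auto
  qed
  then show ?case unfolding w_def by simp
qed

lemma s0_stable:
  assumes c0: "\<forall>i. p \<le> i \<longrightarrow> i < N \<longrightarrow> c $ i = 0" and v: "v \<in> carrier_vec N"
  shows "(T ^^ Suc (sum_list rs + last rs)) v = (T ^^ (sum_list rs + last rs)) v"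
proof -
  define w where "w = (T ^^ last rs) v"
  have w: "w \<in> carrier_vec N" unfolding w_def by (rule it_car[OF v])
  have wz: "\<forall>i. p \<le> i \<longrightarrow> i < N \<longrightarrow> w $ i = 0"
    using s0_decay[OF c0 v, of "last rs"] last_le unfolding w_def by auto
  have G0: "\<forall>i. p \<le> i \<longrightarrow> i < N - 1 \<longrightarrow> c $ i = 0" using c0 by auto
  define u where "u = (T ^^ sum_list rs) w"
  have u: "u \<in> carrier_vec N" unfolding u_def by (rule it_car[OF w])
  have uz: "\<forall>i. l \<le> i \<longrightarrow> i < N \<longrightarrow> u $ i = 0" using nil_full[OF G0 w wz] unfolding u_def by blast
  have K: "(T ^^ (sum_list rs + last rs)) v = u" unfolding u_def w_def by (simp add: funpow_add)
  show ?thesis using K top_fix[OF u uz] by simp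
qed

lemma s0_fixed:
  assumes c0: "\<forall>i. p \<le> i \<longrightarrow> i < N \<longrightarrow> c $ i = 0" and v: "v \<in> carrier_vec N" and Tv: "C *\<^sub>v v = v"
  shows "\<forall>i. l \<le> i \<longrightarrow> i < N \<longrightarrow> v $ i = 0"
proof -
  have lb: "v $ i = 0" if "p \<le> i" "i < N" for i
    using that
  proof (induction i rule: less_induct)
    case (less i)
    have "v $ i = (C *\<^sub>v v) $ i" using Tv by simp
    also have "\<dots> = sh v i" unfolding Cv[OF v less.prems(2)] using c0 less.prems by simp
    finally have e: "v $ i = sh v i" .
    have "\<not> i < l" using less.prems lp by simp
    moreover have "\<not> isst rs (i - l) \<Longrightarrow> v $ (i - 1) = 0"
    proof -
      assume "\<not> isst rs (i - l)"
      then have "i \<noteq> p" using isst_p by auto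
      then show "v $ (i - 1) = 0" using less.IH[of "i - 1"] less.prems by simp
    qed
    ultimately show ?case using e unfolding sh_def by auto
  qed
  have "v $ (N - 1) = 0" using lb[of "N - 1"] pN N1 by simp
  then show ?thesis using fix0[OF v Tv] by blast
qed

lemma lb_zero:
  assumes G0: "\<forall>i. p \<le> i \<longrightarrow> i < N - 1 \<longrightarrow> c $ i = 0" and v: "v \<in> carrier_vec N"
  shows "\<forall>i. p \<le> i \<longrightarrow> i < N - 1 \<longrightarrow> i - p < m \<longrightarrow> (T ^^ m) v $ i = 0"
proof (induction m)
  case 0 then show ?case by simp
next
  case (Suc m)
  define w where "w = (T ^^ m) v"
  have w: "w \<in> carrier_vec N" unfolding w_def by (rule it_car[OF v])
  have IH: "\<And>i. p \<le> i \<Longrightarrow> i < N - 1 \<Longrightarrow> i - p < m \<Longrightarrow> w $ i = 0" using Suc.IH unfolding w_def by auto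
  have "(C *\<^sub>v w) $ i = 0" if i: "p \<le> i" "i < N - 1" "i - p < Suc m" for i
  proof -
    have iN: "i < N" using i by simp
    have e: "(C *\<^sub>v w) $ i = sh w i" using Cv[OF w iN] G0 i by simp
    have "\<not> i < l" using i lp by simp
    moreover have "\<not> isst rs (i - l) \<Longrightarrow> w $ (i - 1) = 0"
    proof -
      assume "\<not> isst rs (i - l)"
      then have "i \<noteq> p" using isst_p by auto
      then show "w $ (i - 1) = 0" using IH[of "i - 1"] i by simp
    qed
    ultimately show ?thesis using e unfolding sh_def by auto
  qed
  then show ?case unfolding w_def by simp
qed

lemma lb_sum:
  assumes G0: "\<forall>i. p \<le> i \<longrightarrow> i < N - 1 \<longrightarrow> c $ i = 0" and c1: "c $ (N - 1) = 1"
    and v: "v \<in> carrier_vec N"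
  shows "(\<Sum>i\<in>{p..<N}. (C *\<^sub>v v) $ i) = (\<Sum>i\<in>{p..<N}. v $ i)"
proof -
  define g where "g i = (if i = p then 0 else v $ (i - 1))" for i
  have f: "(C *\<^sub>v v) $ i = g i + (if i = N - 1 then v $ (N - 1) else 0)" if i: "i \<in> {p..<N}" for i
  proof -
    have iN: "i < N" "p \<le> i" using i by auto
    have "\<not> i < l" using iN lp by simp
    moreover have "isst rs (i - l) \<longleftrightarrow> i = p" using isst_p notst[of i] iN by (cases "i = p") auto
    moreover have "c $ i * v $ (N - 1) = (if i = N - 1 then v $ (N - 1) else 0)"
      using G0 c1 iN by auto
    ultimately show ?thesis unfolding Cv[OF v iN(1)] sh_def g_def by auto
  qed
  have "(\<Sum>i\<in>{p..<N}. (C *\<^sub>v v) $ i) = (\<Sum>i\<in>{p..<N}. g i) + v $ (N - 1)"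
    using f pN N1 by (simp add: sum.distrib sum.delta)
  also have "(\<Sum>i\<in>{p..<N}. g i) = (\<Sum>i\<in>{Suc p..<N}. v $ (i - 1))"
    using pN by (simp add: sum.atLeast_Suc_lessThan g_def)
  also have "\<dots> = (\<Sum>i\<in>{p..<N - 1}. v $ i)"
  proof -
    have "N = Suc (N - 1)" using pN by simp
    then have "(\<Sum>i\<in>{Suc p..<N}. v $ (i - 1)) = (\<Sum>i\<in>{Suc p..<Suc (N - 1)}. v $ (i - 1))" by simp
    also have "\<dots> = (\<Sum>i\<in>{p..<N - 1}. v $ i)" by (simp only: sum.shift_bounds_Suc_ivl) simp
    finally show ?thesis .
  qed
  also have "(\<Sum>i\<in>{p..<N - 1}. v $ i) + v $ (N - 1) = (\<Sum>i\<in>{p..<N}. v $ i)"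
  proof -
    have "{p..<N} = insert (N - 1) {p..<N - 1}" using pN by auto
    then show ?thesis by simp
  qed
  finally show ?thesis .
qed

lemma lb_sum_it:
  assumes G0: "\<forall>i. p \<le> i \<longrightarrow> i < N - 1 \<longrightarrow> c $ i = 0" and c1: "c $ (N - 1) = 1"
    and v: "v \<in> carrier_vec N"
  shows "(\<Sum>i\<in>{p..<N}. (T ^^ m) v $ i) = (\<Sum>i\<in>{p..<N}. v $ i)"
proof (induction m)
  case 0 then show ?case by simp
next
  case (Suc m)
  then show ?case using lb_sum[OF G0 c1 it_car[OF v, of m]] by simp
qed

lemma top_pres:
  assumes ct: "\<forall>i<l. c $ i = 0" and v: "v \<in> carrier_vec N"
  shows "\<forall>i<l. (T ^^ m) v $ i = v $ i"
proof (induction m)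
  case 0 then show ?case by simp
next
  case (Suc m)
  have "(C *\<^sub>v (T ^^ m) v) $ i = (T ^^ m) v $ i" if "i < l" for i
    using Cv[OF it_car[OF v, of m], of i] that lN N1 ct unfolding sh_def by simp
  then show ?case using Suc by simp
qed

end

lemma vec_diff_zero:
  fixes a :: "'a::field vec"
  shows "a \<in> carrier_vec n \<Longrightarrow> b \<in> carrier_vec n \<Longrightarrow> a - b = 0\<^sub>v n \<Longrightarrow> a = b"
  by (metis (no_types, lifting) carrier_vecD eq_vecI index_minus_vec(1) index_zero_vec(1) right_minus_eq)

context LC
begin

lemma s1_stable:
  assumes G0: "\<forall>i. p \<le> i \<longrightarrow> i < N - 1 \<longrightarrow> c $ i = 0" and c1: "c $ (N - 1) = 1"
    and ct: "\<forall>i<l. c $ i = 0" and v: "v \<in> carrier_vec N"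
  shows "(T ^^ Suc (sum_list rs + last rs)) v = (T ^^ (sum_list rs + last rs)) v"
proof -
  define r where "r = last rs"
  define a where "a = (T ^^ Suc r) v"
  define b where "b = (T ^^ r) v"
  have a: "a \<in> carrier_vec N" unfolding a_def by (rule it_car[OF v])
  have b: "b \<in> carrier_vec N" unfolding b_def by (rule it_car[OF v])
  have az: "a $ i = 0" if "p \<le> i" "i < N - 1" for i
  proof -
    have "i - p < Suc r" using that last_le unfolding r_def by linarith
    then show ?thesis using lb_zero[OF G0 v, of "Suc r"] that unfolding a_def by blast
  qed
  have bz: "b $ i = 0" if "p \<le> i" "i < N - 1" for i
  proof -
    have "i - p < r" using that last_le unfolding r_def by linarith
    then show ?thesis using lb_zero[OF G0 v, of r] that unfolding b_def by blast
  qed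
  have split: "{p..<N} = insert (N - 1) {p..<N - 1}" using pN by auto
  have sa: "(\<Sum>i\<in>{p..<N}. a $ i) = a $ (N - 1)"
    unfolding split using az by simp
  have sb: "(\<Sum>i\<in>{p..<N}. b $ i) = b $ (N - 1)"
    unfolding split using bz by simp
  have abN: "a $ (N - 1) = b $ (N - 1)"
    using sa sb lb_sum_it[OF G0 c1 v, of "Suc r"] lb_sum_it[OF G0 c1 v, of r]
    unfolding a_def b_def by simp
  have at: "a $ i = b $ i" if "i < l" for i
    using top_pres[OF ct v, of "Suc r"] top_pres[OF ct v, of r] that unfolding a_def b_def by simp
  define y where "y = a - b"
  have y: "y \<in> carrier_vec N" unfolding y_def using a b by simp
  have yz: "\<forall>i. p \<le> i \<longrightarrow> i < N \<longrightarrow> y $ i = 0"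
  proof (intro allI impI)
    fix i assume i: "p \<le> i" "i < N"
    show "y $ i = 0"
    proof (cases "i = N - 1")
      case True then show ?thesis unfolding y_def using abN b i by simp
    next
      case False then have "i < N - 1" using i by simp
      then show ?thesis unfolding y_def using az bz b i by simp
    qed
  qed
  have yt: "\<forall>i<l. y $ i = 0" unfolding y_def using at b lN N1 by simp
  have "(T ^^ sum_list rs) y = 0\<^sub>v N"
  proof (rule eq_vecI)
    note nf = nil_full[OF G0 y yz]
    fix i assume "i < dim_vec (0\<^sub>v N :: 'a vec)"
    then have i: "i < N" by simp
    show "(T ^^ sum_list rs) y $ i = 0\<^sub>v N $ i"
      using nf yt i by (cases "i < l") auto
  qed (use it_car[OF y] in simp)
  then have "(T ^^ sum_list rs) a - (T ^^ sum_list rs) b = 0\<^sub>v N"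
    using it_minus[OF C_carrier a b] unfolding y_def by simp
  then have "(T ^^ sum_list rs) a = (T ^^ sum_list rs) b"
    by (rule vec_diff_zero[OF it_car[OF a] it_car[OF b]])
  moreover have "(T ^^ Suc (sum_list rs + r)) v = (T ^^ sum_list rs) a"
  proof -
    have "Suc (sum_list rs + r) = sum_list rs + Suc r" by simp
    then show ?thesis unfolding a_def by (simp only: funpow_add o_apply)
  qed
  moreover have "(T ^^ (sum_list rs + r)) v = (T ^^ sum_list rs) b"
    unfolding b_def by (simp only: funpow_add o_apply)
  ultimately show ?thesis unfolding r_def by simp
qed

lemma s1_x:
  assumes G0: "\<forall>i. p \<le> i \<longrightarrow> i < N - 1 \<longrightarrow> c $ i = 0" and c1: "c $ (N - 1) = 1"
  shows "(\<forall>i. p \<le> i \<longrightarrow> i < N - 1 \<longrightarrow> (T ^^ m) (unit_vec N (N - 1)) $ i = 0)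
    \<and> (T ^^ m) (unit_vec N (N - 1)) $ (N - 1) = 1"
proof (induction m)
  case 0 then show ?case using N1 by simp
next
  case (Suc m)
  define w where "w = (T ^^ m) (unit_vec N (N - 1))"
  have w: "w \<in> carrier_vec N" unfolding w_def by (rule it_car) simp
  have IH: "\<And>i. p \<le> i \<Longrightarrow> i < N - 1 \<Longrightarrow> w $ i = 0" "w $ (N - 1) = 1"
    using Suc.IH unfolding w_def by auto
  have A: "(C *\<^sub>v w) $ i = 0" if i: "p \<le> i" "i < N - 1" for i
  proof -
    have iN: "i < N" using i by simp
    have e: "(C *\<^sub>v w) $ i = sh w i" using Cv[OF w iN] G0 i by simp
    have "\<not> i < l" using i lp by simp
    moreover have "\<not> isst rs (i - l) \<Longrightarrow> w $ (i - 1) = 0"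
    proof -
      assume "\<not> isst rs (i - l)"
      then have "i \<noteq> p" using isst_p by auto
      then show "w $ (i - 1) = 0" using IH(1)[of "i - 1"] i by simp
    qed
    ultimately show ?thesis using e unfolding sh_def by auto
  qed
  have B: "(C *\<^sub>v w) $ (N - 1) = 1"
  proof -
    have e: "(C *\<^sub>v w) $ (N - 1) = sh w (N - 1) + 1" using Cv[OF w N1] c1 IH(2) by simp
    have "\<not> N - 1 < l" using lN by simp
    moreover have "\<not> isst rs (N - 1 - l) \<Longrightarrow> w $ (N - 1 - 1) = 0"
    proof -
      assume "\<not> isst rs (N - 1 - l)"
      then have "N - 1 \<noteq> p" using isst_p by (metis)
      then show "w $ (N - 1 - 1) = 0" using IH(1)[of "N - 1 - 1"] pN by simp
    qed
    ultimately show ?thesis using e unfolding sh_def by auto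
  qed
  show ?case using A B unfolding w_def by simp
qed

end

context LC
begin

lemma necessity:
  assumes k: "C ^\<^sub>m Suc k = C ^\<^sub>m k"
  shows "(\<forall>i. p \<le> i \<longrightarrow> i < N \<longrightarrow> c $ i = 0) \<or>
    ((\<forall>i. p \<le> i \<longrightarrow> i < N - 1 \<longrightarrow> c $ i = 0) \<and> c $ (N - 1) = 1 \<and> (\<forall>i<l. c $ i = 0))"
proof (cases "\<forall>i. p \<le> i \<longrightarrow> i < N \<longrightarrow> c $ i = 0")
  case True then show ?thesis by blast
next
  case False
  have itS: "(T ^^ Suc k) v = (T ^^ k) v" if "v \<in> carrier_vec N" for v
    by (rule itS_of_mat[OF C_carrier k that])
  define P where "P i \<longleftrightarrow> p \<le> i \<and> i < N \<and> c $ i \<noteq> 0" for i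
  have exP: "\<exists>i. P i" using False unfolding P_def by blast
  define t where "t = (LEAST i. P i)"
  have Pt: "P t" unfolding t_def using exP by (metis LeastI)
  have tmin: "c $ i = 0" if "p \<le> i" "i < t" for i
  proof -
    have "\<not> P i" using that not_less_Least unfolding t_def by blast
    then show ?thesis using that Pt unfolding P_def by auto
  qed
  have t: "p \<le> t" "t < N" "c $ t \<noteq> 0" using Pt unfolding P_def by auto
  define Q where "Q w \<longleftrightarrow> (\<forall>i. p \<le> i \<longrightarrow> i < t \<longrightarrow> w $ i = (0::'a))" for w
  define LZ where "LZ w \<longleftrightarrow> (\<forall>i. p \<le> i \<longrightarrow> i < N \<longrightarrow> w $ i = (0::'a))" for w
  have QT: "Q (C *\<^sub>v w)" if w: "w \<in> carrier_vec N" "Q w" for w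
    unfolding Q_def
  proof (intro allI impI)
    fix i assume i: "p \<le> i" "i < t"
    have iN: "i < N" using i t by simp
    have e: "(C *\<^sub>v w) $ i = sh w i" using Cv[OF w(1) iN] tmin[OF i] by simp
    have "\<not> i < l" using i lp by simp
    moreover have "\<not> isst rs (i - l) \<Longrightarrow> w $ (i - 1) = 0"
    proof -
      assume "\<not> isst rs (i - l)"
      then have "i \<noteq> p" using isst_p by auto
      then show "w $ (i - 1) = 0" using w(2) i unfolding Q_def by simp
    qed
    ultimately show "(C *\<^sub>v w) $ i = 0" using e unfolding sh_def by auto
  qed
  have INJ: "LZ w" if w: "w \<in> carrier_vec N" "Q w" "LZ (C *\<^sub>v w)" for w
  proof -
    have Ct: "(C *\<^sub>v w) $ t = 0" using w(3) t unfolding LZ_def by simp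
    have sht: "sh w t = 0"
    proof -
      have "\<not> t < l" using t lp by simp
      moreover have "\<not> isst rs (t - l) \<Longrightarrow> w $ (t - 1) = 0"
      proof -
        assume "\<not> isst rs (t - l)"
        then have "t \<noteq> p" using isst_p by auto
        then show "w $ (t - 1) = 0" using w(2) t unfolding Q_def by simp
      qed
      ultimately show ?thesis unfolding sh_def by auto
    qed
    have "c $ t * w $ (N - 1) = 0" using Ct Cv[OF w(1) t(2)] sht by simp
    then have wN: "w $ (N - 1) = 0" using t(3) by simp
    show "LZ w" unfolding LZ_def
    proof (intro allI impI)
      fix i assume i: "p \<le> i" "i < N"
      show "w $ i = 0"
      proof (cases "i = N - 1")
        case True then show ?thesis using wN by simp
      next
        case False
        then have i1: "Suc i < N" "p < Suc i" using i by auto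
        have "(C *\<^sub>v w) $ Suc i = 0" using w(3) i1 unfolding LZ_def by simp
        moreover have "(C *\<^sub>v w) $ Suc i = w $ i"
          using Cv[OF w(1) i1(1)] wN notst[OF i1(2) i1(1)] lp i unfolding sh_def by simp
        ultimately show ?thesis by simp
      qed
    qed
  qed
  have ITER: "LZ w" if "w \<in> carrier_vec N" "Q w" "LZ ((T ^^ m) w)" for m w
    using that
  proof (induction m arbitrary: w)
    case 0 then show ?case by simp
  next
    case (Suc m)
    have Cw: "C *\<^sub>v w \<in> carrier_vec N" using T_car[OF Suc.prems(1)] .
    have "(T ^^ Suc m) w = (T ^^ m) (C *\<^sub>v w)" by (simp only: funpow_Suc_right o_apply)
    then have "LZ (C *\<^sub>v w)" using Suc.IH[OF Cw QT[OF Suc.prems(1,2)]] Suc.prems(3) by simp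
    then show ?case using INJ Suc.prems(1,2) by blast
  qed
  define e where "e = (unit_vec N t :: 'a vec)"
  have e: "e \<in> carrier_vec N" unfolding e_def by simp
  have Qe: "Q e" unfolding Q_def e_def using t by auto
  define w0 where "w0 = C *\<^sub>v e - e"
  have Ce: "C *\<^sub>v e \<in> carrier_vec N" using T_car[OF e] .
  have w0: "w0 \<in> carrier_vec N" unfolding w0_def using Ce e by simp
  have Qw0: "Q w0" using QT[OF e Qe] Qe Ce e t(2) unfolding Q_def w0_def by auto
  have "(T ^^ k) w0 = (T ^^ k) (C *\<^sub>v e) - (T ^^ k) e"
    unfolding w0_def by (rule it_minus[OF C_carrier Ce e])
  also have "(T ^^ k) (C *\<^sub>v e) = (T ^^ Suc k) e" by (simp only: funpow_Suc_right o_apply)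
  also have "\<dots> = (T ^^ k) e" by (rule itS[OF e])
  finally have "(T ^^ k) w0 = 0\<^sub>v N"
    using it_car[OF e, of k] by simp
  then have "LZ ((T ^^ k) w0)" unfolding LZ_def by simp
  then have LZw0: "LZ w0" using ITER[OF w0 Qw0] by blast
  have eqe: "(C *\<^sub>v e) $ i = e $ i" if "p \<le> i" "i < N" for i
    using LZw0 that Ce e unfolding LZ_def w0_def by simp
  have tN: "t = N - 1"
  proof (rule ccontr)
    assume "t \<noteq> N - 1"
    then have i1: "Suc t < N" "p < Suc t" using t by auto
    have eN: "e $ (N - 1) = 0" unfolding e_def using \<open>t \<noteq> N - 1\<close> N1 t by simp
    have "(C *\<^sub>v e) $ Suc t = 1"
      using Cv[OF e i1(1)] eN notst[OF i1(2) i1(1)] lp t unfolding sh_def e_def by simp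
    moreover have "e $ Suc t = 0" unfolding e_def using i1 by simp
    ultimately show False using eqe[of "Suc t"] i1 by simp
  qed
  have c1: "c $ (N - 1) = 1"
  proof -
    have eN: "e $ (N - 1) = 1" unfolding e_def using tN N1 by simp
    have sh0: "sh e (N - 1) = 0"
    proof -
      have "\<not> N - 1 < l" using lN by simp
      moreover have "\<not> isst rs (N - 1 - l) \<Longrightarrow> e $ (N - 1 - 1) = 0"
      proof -
        assume "\<not> isst rs (N - 1 - l)"
        then have "N - 1 \<noteq> l" using st_l by auto
        then have "N - 1 - 1 \<noteq> N - 1" using lN by linarith
        then show "e $ (N - 1 - 1) = 0" unfolding e_def using tN N1 by simp
      qed
      ultimately show ?thesis unfolding sh_def by auto
    qed
    have "(C *\<^sub>v e) $ (N - 1) = c $ (N - 1)" using Cv[OF e N1] eN sh0 by simp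
    then show ?thesis using eqe[of "N - 1"] eN pN lp by simp
  qed
  have G0: "\<forall>i. p \<le> i \<longrightarrow> i < N - 1 \<longrightarrow> c $ i = 0" using tmin tN by auto
  define x where "x = (T ^^ k) (unit_vec N (N - 1))"
  have x: "x \<in> carrier_vec N" unfolding x_def by (rule it_car) simp
  have Cx: "C *\<^sub>v x = x" using itS[of "unit_vec N (N - 1)"] unfolding x_def by simp
  have xN: "x $ (N - 1) = 1" using s1_x[OF G0 c1, of k] unfolding x_def by blast
  have ct: "\<forall>i<l. c $ i = 0"
  proof (intro allI impI)
    fix i assume i: "i < l"
    have iN: "i < N" using i lN N1 by simp
    have "x $ i = x $ i + c $ i" using Cv[OF x iN] Cx xN i unfolding sh_def by simp
    then show "c $ i = 0" by simp
  qed
  show ?thesis using G0 c1 ct by blast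
qed

end

lemma set_cols_eq: "set (cols A) = col A ` {..<dim_col A}"
  unfolding cols_def by auto

lemma col_unit:
  fixes M :: "'a::field mat"
  assumes "M \<in> carrier_mat n n" "j < n"
  shows "col M j = M *\<^sub>v unit_vec n j"
  by (rule eq_vecI) (use assms in auto)

context LC
begin

lemma rank_S0:
  assumes c0: "\<forall>i. p \<le> i \<longrightarrow> i < N \<longrightarrow> c $ i = 0"
  shows "C ^\<^sub>m Suc (sum_list rs + last rs) = C ^\<^sub>m (sum_list rs + last rs) \<and>
    mrank N (C ^\<^sub>m (sum_list rs + last rs)) = l"
proof -
  define K where "K = sum_list rs + last rs"
  have st: "(T ^^ Suc K) v = (T ^^ K) v" if "v \<in> carrier_vec N" for v
    unfolding K_def by (rule s0_stable[OF c0 that])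
  have CK: "C ^\<^sub>m Suc K = C ^\<^sub>m K" by (rule mat_of_itS[OF C_carrier st])
  define P where "P = C ^\<^sub>m K"
  have P: "P \<in> carrier_mat N N" unfolding P_def using C_carrier by simp
  have colP: "col P j = (T ^^ K) (unit_vec N j)" if "j < N" for j
    using col_unit[OF P that] pow_it[OF C_carrier, of "unit_vec N j" K] unfolding P_def by simp
  have fixc: "C *\<^sub>v col P j = col P j" if "j < N" for j
    using colP[OF that] st[of "unit_vec N j"] by simp
  have colc: "col P j \<in> carrier_vec N" if "j < N" for j using P that by simp
  interpret V: vec_space "TYPE('a)" N .
  define S where "S = (unit_vec N ` {..<l} :: 'a vec set)"
  have Sc: "S \<subseteq> carrier_vec N" unfolding S_def by auto
  have fin: "finite S" unfolding S_def by simp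
  have li: "V.lin_indpt S" unfolding S_def
    by (rule V.unit_lin_indpt') (use lN N1 in auto)
  have sub1: "set (cols P) \<subseteq> V.span S"
  proof
    fix x assume "x \<in> set (cols P)"
    then obtain j where j: "j < N" "x = col P j" using P unfolding set_cols_eq by auto
    have "\<forall>i. l \<le> i \<longrightarrow> i < N \<longrightarrow> x $ i = 0" using s0_fixed[OF c0 colc[OF j(1)] fixc[OF j(1)]] j by simp
    then show "x \<in> V.span S" unfolding S_def using V.unit_span[of "{..<l}" x] colc j by auto
  qed
  have sub2: "S \<subseteq> V.span (set (cols P))"
  proof
    fix x assume "x \<in> S"
    then obtain i where i: "i < l" "x = unit_vec N i" unfolding S_def by auto
    have iN: "i < N" using i lN N1 by simp
    have "C *\<^sub>v unit_vec N i = unit_vec N i"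
      by (rule top_fix) (use i in auto)
    then have "(T ^^ K) (unit_vec N i) = unit_vec N i" by (rule it_fix)
    then have "x = col P i" using colP[OF iN] i by simp
    then have "x \<in> set (cols P)" using iN P unfolding set_cols_eq by auto
    moreover have "set (cols P) \<subseteq> carrier_vec N" using P cols_dim[of P] by simp
    ultimately show "x \<in> V.span (set (cols P))" using V.in_own_span by blast
  qed
  have "V.rank P = card S" by (rule V.rank_eq_card_span[OF P Sc fin li sub1 sub2])
  moreover have "card S = l" unfolding S_def
    by (subst card_image) (auto simp: inj_on_def)
  ultimately show ?thesis using CK unfolding P_def K_def by simp
qed

end

context LC
begin

lemma rank_S1:
  assumes G0: "\<forall>i. p \<le> i \<longrightarrow> i < N - 1 \<longrightarrow> c $ i = 0" and c1: "c $ (N - 1) = 1"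
    and ct: "\<forall>i<l. c $ i = 0"
  shows "C ^\<^sub>m Suc (sum_list rs + last rs) = C ^\<^sub>m (sum_list rs + last rs) \<and>
    mrank N (C ^\<^sub>m (sum_list rs + last rs)) = l + 1"
proof -
  define K where "K = sum_list rs + last rs"
  have st: "(T ^^ Suc K) v = (T ^^ K) v" if "v \<in> carrier_vec N" for v
    unfolding K_def by (rule s1_stable[OF G0 c1 ct that])
  have CK: "C ^\<^sub>m Suc K = C ^\<^sub>m K" by (rule mat_of_itS[OF C_carrier st])
  define P where "P = C ^\<^sub>m K"
  have P: "P \<in> carrier_mat N N" unfolding P_def using C_carrier by simp
  have colP: "col P j = (T ^^ K) (unit_vec N j)" if "j < N" for j
    using col_unit[OF P that] pow_it[OF C_carrier, of "unit_vec N j" K] unfolding P_def by simp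
  have fixc: "C *\<^sub>v col P j = col P j" if "j < N" for j
    using colP[OF that] st[of "unit_vec N j"] by simp
  have colc: "col P j \<in> carrier_vec N" if "j < N" for j using P that by simp
  interpret V: vec_space "TYPE('a)" N .
  define x where "x = col P (N - 1)"
  have x: "x \<in> carrier_vec N" unfolding x_def by (rule colc[OF N1])
  have Cx: "C *\<^sub>v x = x" unfolding x_def by (rule fixc[OF N1])
  have xN: "x $ (N - 1) = 1" using s1_x[OF G0 c1, of K] colP[OF N1] unfolding x_def by simp
  define E where "E = (unit_vec N ` {..<l} :: 'a vec set)"
  define S where "S = insert x E"
  have Ec: "E \<subseteq> carrier_vec N" unfolding E_def by auto
  have Sc: "S \<subseteq> carrier_vec N" unfolding S_def using Ec x by simp
  have fin: "finite S" unfolding S_def E_def by simp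
  have li: "V.lin_indpt S" unfolding S_def E_def
    by (rule V.unit_lin_indpt[OF _ x N1]) (use lN N1 xN in auto)
  have xS: "x \<in> V.span S" using V.in_own_span[OF Sc] unfolding S_def by blast
  have ES: "V.span E \<subseteq> V.span S" unfolding S_def by (rule V.span_is_monotone) blast
  have sub1: "set (cols P) \<subseteq> V.span S"
  proof
    fix u assume "u \<in> set (cols P)"
    then obtain j where j: "j < N" "u = col P j" using P unfolding set_cols_eq by auto
    have u: "u \<in> carrier_vec N" using colc j by simp
    have Cu: "C *\<^sub>v u = u" using fixc j by simp
    define a where "a = u $ (N - 1)"
    define u' where "u' = u - a \<cdot>\<^sub>v x"
    have u': "u' \<in> carrier_vec N" unfolding u'_def using u x by simp
    have "C *\<^sub>v u' = C *\<^sub>v u - C *\<^sub>v (a \<cdot>\<^sub>v x)"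
      unfolding u'_def by (rule mult_minus_distrib_mat_vec[OF C_carrier u]) (use x in simp)
    also have "\<dots> = u'" unfolding u'_def using mult_mat_vec[OF C_carrier x, of a] Cu Cx by simp
    finally have Cu': "C *\<^sub>v u' = u'" .
    have u'N: "u' $ (N - 1) = 0" unfolding u'_def a_def using xN u x N1 by simp
    have "\<forall>i. l \<le> i \<longrightarrow> i < N \<longrightarrow> u' $ i = 0" by (rule fix0[OF u' Cu' u'N])
    then have "u' \<in> V.span E" unfolding E_def using V.unit_span[of "{..<l}" u'] u' by auto
    then have u'S: "u' \<in> V.span S" using ES by blast
    have "u = u' + a \<cdot>\<^sub>v x" unfolding u'_def by (rule eq_vecI) (use u x in auto)
    moreover have "a \<cdot>\<^sub>v x \<in> V.span S" by (rule V.span_smult_closed[OF Sc xS])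
    ultimately show "u \<in> V.span S" using V.span_add_closed[OF Sc u'S] by simp
  qed
  have sub2: "S \<subseteq> V.span (set (cols P))"
  proof -
    have cc: "set (cols P) \<subseteq> carrier_vec N" using P cols_dim[of P] by simp
    have "S \<subseteq> set (cols P)"
    proof
      fix y assume "y \<in> S"
      then consider "y = x" | i where "i < l" "y = unit_vec N i" unfolding S_def E_def by auto
      then show "y \<in> set (cols P)"
      proof cases
        case 1 then show ?thesis unfolding x_def using P N1 unfolding set_cols_eq by auto
      next
        case (2 i)
        have iN: "i < N" using 2 lN N1 by simp
        have "C *\<^sub>v unit_vec N i = unit_vec N i"
          by (rule top_fix) (use 2 in auto)
        then have "(T ^^ K) (unit_vec N i) = unit_vec N i" by (rule it_fix)
        then have "y = col P i" using colP[OF iN] 2 by simp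
        then show ?thesis using iN P unfolding set_cols_eq by auto
      qed
    qed
    then show ?thesis using V.in_own_span[OF cc] by blast
  qed
  have "V.rank P = card S" by (rule V.rank_eq_card_span[OF P Sc fin li sub1 sub2])
  moreover have "card S = l + 1"
  proof -
    have "x \<notin> E"
    proof
      assume "x \<in> E"
      then obtain i where "i < l" "x = unit_vec N i" unfolding E_def by auto
      then show False using xN lN N1 by simp
    qed
    moreover have "card E = l" unfolding E_def by (subst card_image) (auto simp: inj_on_def)
    ultimately show ?thesis unfolding S_def E_def by simp
  qed
  ultimately show ?thesis using CK unfolding P_def K_def by simp
qed

end

context LC
begin

definition "Ic = {i. i < N \<and> (i < l \<or> \<not> isst rs (i - l))}"

lemma rank_C:
  "mrank N C = card Ic + (if (\<forall>i. l \<le> i \<longrightarrow> i < N \<longrightarrow> isst rs (i - l) \<longrightarrow> c $ i = 0) then 0 else 1)"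
proof -
  interpret V: vec_space "TYPE('a)" N .
  have IcN: "Ic \<subseteq> {..<N}" unfolding Ic_def by auto
  have finI: "finite Ic" using IcN finite_subset by blast
  define E where "E = (unit_vec N ` Ic :: 'a vec set)"
  have Ec: "E \<subseteq> carrier_vec N" unfolding E_def by auto
  have finE: "finite E" unfolding E_def using finI by simp
  have cardE: "card E = card Ic" unfolding E_def
    by (subst card_image) (use IcN in \<open>auto simp: inj_on_def\<close>)
  have cc: "c \<in> carrier_vec N" unfolding c_def using col_carrier_vec[OF N1 C_carrier] .
  have ccols: "set (cols C) \<subseteq> carrier_vec N" using C_carrier cols_dim[of C] by simp
  have colE: "col C j \<in> V.span E" if j: "j < N - 1" for j
  proof -
    have jN: "j < N" using j by simp
    have "(col C j) $ i = 0" if i: "i < N" "i \<notin> Ic" for i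
    proof -
      have "\<not> i < l" "isst rs (i - l)" using i unfolding Ic_def by auto
      then show ?thesis using C_entry[OF i(1) jN] j i C_carrier by simp
    qed
    then show ?thesis unfolding E_def using V.unit_span[OF IcN, of "col C j"] C_carrier jN by simp
  qed
  have Ecols: "E \<subseteq> set (cols C)"
  proof
    fix y assume "y \<in> E"
    then obtain i where i: "i \<in> Ic" "y = unit_vec N i" unfolding E_def by auto
    have iN: "i < N" using i unfolding Ic_def by simp
    define j where "j = (if i < l then i else i - 1)"
    have ij: "i < l \<or> (i \<noteq> l \<and> l \<le> i \<and> \<not> isst rs (i - l))" using i st_l unfolding Ic_def by auto
    have jN: "j < N - 1" unfolding j_def using ij iN lN by auto
    have "col C j = unit_vec N i"
    proof (rule eq_vecI)
      fix k assume "k < dim_vec (unit_vec N i :: 'a vec)"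
      then have k: "k < N" by simp
      have jN': "j < N" "j \<noteq> N - 1" using jN by auto
      have e: "col C j $ k = C $$ (k, j)" using C_carrier k jN' by simp
      show "col C j $ k = unit_vec N i $ k"
      proof (cases "i < l")
        case True
        then have jj: "j = i" unfolding j_def by simp
        have "k = Suc i \<Longrightarrow> \<not> k < l \<Longrightarrow> isst rs (k - l)" using True st_l by (simp add: Suc_diff_le)
        then show ?thesis unfolding e C_entry[OF k jN'(1)] using jN'(2) jj True k iN st_l by auto
      next
        case False
        then have ii: "i \<noteq> l" "l \<le> i" "\<not> isst rs (i - l)" using ij by auto
        then have jj: "j = i - 1" unfolding j_def by simp
        show ?thesis unfolding e C_entry[OF k jN'(1)] using jN'(2) jj ii k iN by auto
      qed
    qed (use C_carrier in simp)
    moreover have "j \<in> {..<dim_col C}" using jN C_carrier by simp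
    ultimately show "y \<in> set (cols C)" using i unfolding set_cols_eq by (metis image_eqI)
  qed
  have cin: "c \<in> set (cols C)" unfolding c_def set_cols_eq using C_carrier N1 by auto
  have lnot: "l \<notin> Ic" "l < N" using st_l lN N1 unfolding Ic_def by auto
  show ?thesis
  proof (cases "\<forall>i. l \<le> i \<longrightarrow> i < N \<longrightarrow> isst rs (i - l) \<longrightarrow> c $ i = 0")
    case True
    have cE: "c \<in> V.span E" unfolding E_def
      by (rule V.unit_span[OF IcN cc]) (use True in \<open>auto simp: Ic_def\<close>)
    have li: "V.lin_indpt E" unfolding E_def
      by (rule V.unit_lin_indpt'[OF IcN]) (use lnot in \<open>auto intro!: exI[of _ l]\<close>)
    have sub1: "set (cols C) \<subseteq> V.span E"
    proof
      fix u assume "u \<in> set (cols C)"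
      then obtain j where j: "j < N" "u = col C j" using C_carrier unfolding set_cols_eq by auto
      show "u \<in> V.span E"
      proof (cases "j = N - 1")
        case True then show ?thesis using cE j unfolding c_def by simp
      next
        case False then show ?thesis using colE[of j] j by simp
      qed
    qed
    have sub2: "E \<subseteq> V.span (set (cols C))" using Ecols V.in_own_span[OF ccols] by blast
    have r: "V.rank C = card E" by (rule V.rank_eq_card_span[OF C_carrier Ec finE li sub1 sub2])
    show ?thesis unfolding if_P[OF True] using r cardE by linarith
  next
    case False
    then obtain j where j: "l \<le> j" "j < N" "isst rs (j - l)" "c $ j \<noteq> 0" by blast
    have jI: "j \<notin> Ic" using j unfolding Ic_def by auto
    define S where "S = insert c E"
    have Sc: "S \<subseteq> carrier_vec N" unfolding S_def using Ec cc by simp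
    have finS: "finite S" unfolding S_def using finE by simp
    have li: "V.lin_indpt S" unfolding S_def E_def
      by (rule V.unit_lin_indpt[OF IcN cc j(2) jI j(4)])
    have cS: "c \<in> V.span S" using V.in_own_span[OF Sc] unfolding S_def by blast
    have ES: "V.span E \<subseteq> V.span S" unfolding S_def by (rule V.span_is_monotone) blast
    have sub1: "set (cols C) \<subseteq> V.span S"
    proof
      fix u assume "u \<in> set (cols C)"
      then obtain j where j: "j < N" "u = col C j" using C_carrier unfolding set_cols_eq by auto
      show "u \<in> V.span S"
      proof (cases "j = N - 1")
        case True then show ?thesis using cS j unfolding c_def by simp
      next
        case False then show ?thesis using colE[of j] j ES by auto
      qed
    qed
    have sub2: "S \<subseteq> V.span (set (cols C))"
    proof -
      have "S \<subseteq> set (cols C)" unfolding S_def using Ecols cin by simp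
      then show ?thesis using V.in_own_span[OF ccols] by blast
    qed
    have "V.rank C = card S" by (rule V.rank_eq_card_span[OF C_carrier Sc finS li sub1 sub2])
    moreover have "c \<notin> E"
    proof
      assume "c \<in> E"
      then obtain i where "i \<in> Ic" "c = unit_vec N i" unfolding E_def by auto
      moreover then have "i \<noteq> j" "i < N" using jI IcN by auto
      ultimately show False using j by simp
    qed
    ultimately have "V.rank C = Suc (card E)" unfolding S_def using card_insert_disjoint[OF finE] by metis
    then show ?thesis unfolding if_not_P[OF False] using cardE by linarith
  qed
qed

end

lemma count_lcr:
  fixes B :: "'a::field mat"
  assumes B: "B \<in> carrier_mat N N" and N: "0 < N"
  shows "card {C \<in> last_col_repl N B. Q (col C (N - 1))} = card {v \<in> carrier_vec N. Q v}"
proof -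
  define mk where "mk v = mat N N (\<lambda>(i,j). if j = N - 1 then v $ i else B $$ (i,j))" for v :: "'a vec"
  have "bij_betw (\<lambda>C. col C (N - 1)) {C \<in> last_col_repl N B. Q (col C (N - 1))} {v \<in> carrier_vec N. Q v}"
  proof (rule bij_betwI[where g = mk])
    show "(\<lambda>C. col C (N - 1)) \<in> {C \<in> last_col_repl N B. Q (col C (N - 1))} \<rightarrow> {v \<in> carrier_vec N. Q v}"
      using N unfolding last_col_repl_def by auto
    show "mk \<in> {v \<in> carrier_vec N. Q v} \<rightarrow> {C \<in> last_col_repl N B. Q (col C (N - 1))}"
    proof
      fix v assume v: "v \<in> {v \<in> carrier_vec N. Q v}"
      have "col (mk v) (N - 1) = v" unfolding mk_def using v N by (intro eq_vecI) auto
      then show "mk v \<in> {C \<in> last_col_repl N B. Q (col C (N - 1))}"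
        using v unfolding last_col_repl_def mk_def by auto
    qed
    fix C assume C: "C \<in> {C \<in> last_col_repl N B. Q (col C (N - 1))}"
    show "mk (col C (N - 1)) = C"
    proof (rule eq_matI)
      fix i j assume i: "i < dim_row C" and j: "j < dim_col C"
      show "mk (col C (N - 1)) $$ (i, j) = C $$ (i, j)"
        using C i j N unfolding mk_def last_col_repl_def by auto
    qed (use C in \<open>auto simp: mk_def last_col_repl_def\<close>)
  next
    fix v assume v: "v \<in> {v \<in> carrier_vec N. Q v}"
    show "col (mk v) (N - 1) = v" unfolding mk_def using v N by (intro eq_vecI) auto
  qed
  then show ?thesis by (rule bij_betw_same_card)
qed

lemma count_vec:
  fixes G :: "'a::{field,finite} vec \<Rightarrow> bool"
  assumes lN: "l < N"
    and G: "\<And>v w. (\<forall>i. l \<le> i \<longrightarrow> i < N - 1 \<longrightarrow> v $ i = w $ i) \<Longrightarrow> G v = G w"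
  shows "card {v \<in> carrier_vec N. G v \<and> v $ (N - 1) = 0} =
    card (UNIV :: 'a set) ^ l * card {v \<in> carrier_vec N. G v \<and> (\<forall>i<l. v $ i = 0) \<and> v $ (N - 1) = 1}"
proof -
  define A where "A = {v \<in> carrier_vec N. G v \<and> v $ (N - 1) = 0}"
  define B where "B = {v \<in> carrier_vec N. G v \<and> (\<forall>i<l. v $ i = 0) \<and> v $ (N - 1) = (1::'a)}"
  define PI where "PI = PiE {..<l} (\<lambda>_. (UNIV :: 'a set))"
  define F where "F v = (restrict (\<lambda>i. v $ i) {..<l}, vec N (\<lambda>i. if i < l then 0 else if i = N - 1 then 1 else v $ i))"
    for v :: "'a vec"
  define H where "H fb = vec N (\<lambda>i. if i < l then fst fb i else if i = N - 1 then 0 else snd fb $ i)"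
    for fb :: "(nat \<Rightarrow> 'a) \<times> 'a vec"
  have N1: "N - 1 < N" "\<not> N - 1 < l" using lN by auto
  have "bij_betw F A (PI \<times> B)"
  proof (rule bij_betwI[where g = H])
    show "F \<in> A \<rightarrow> PI \<times> B"
    proof
      fix v assume v: "v \<in> A"
      have "G (vec N (\<lambda>i. if i < l then 0 else if i = N - 1 then 1 else v $ i)) = G v"
        by (rule G) auto
      then show "F v \<in> PI \<times> B" using v N1 unfolding A_def B_def PI_def F_def by auto
    qed
    show "H \<in> PI \<times> B \<rightarrow> A"
    proof
      fix fb assume fb: "fb \<in> PI \<times> B"
      have "G (H fb) = G (snd fb)" unfolding H_def by (rule G) auto
      then show "H fb \<in> A" using fb N1 unfolding A_def B_def H_def by auto
    qed
    fix v assume v: "v \<in> A"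
    show "H (F v) = v" unfolding H_def F_def using v N1 unfolding A_def by (intro eq_vecI) auto
  next
    fix fb assume fb: "fb \<in> PI \<times> B"
    obtain f b where fb': "fb = (f, b)" by fastforce
    have f: "f \<in> PI" and b: "b \<in> B" using fb fb' by auto
    have "restrict (\<lambda>i. H fb $ i) {..<l} = f"
    proof
      fix i show "restrict (\<lambda>i. H fb $ i) {..<l} i = f i"
        using f lN unfolding H_def PI_def fb' by (cases "i < l") (auto simp: PiE_def extensional_def)
    qed
    moreover have "vec N (\<lambda>i. if i < l then 0 else if i = N - 1 then 1 else H fb $ i) = b"
      using b N1 unfolding H_def B_def fb' by (intro eq_vecI) auto
    ultimately show "F (H fb) = fb" unfolding F_def fb' by simp
  qed
  then have "card A = card (PI \<times> B)" by (rule bij_betw_same_card)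
  also have "\<dots> = card PI * card B" by (rule card_cartesian_product)
  also have "card PI = card (UNIV :: 'a set) ^ l" unfolding PI_def by (simp add: card_PiE)
  finally show ?thesis unfolding A_def B_def .
qed

context LC
begin

lemma classify_S0:
  "(semi_idempotent N C \<and> srk N C = l) \<longleftrightarrow> (\<forall>i. p \<le> i \<longrightarrow> i < N \<longrightarrow> c $ i = 0)"
  and classify_S1:
  "(semi_idempotent N C \<and> srk N C = l + 1) \<longleftrightarrow>
    ((\<forall>i. p \<le> i \<longrightarrow> i < N - 1 \<longrightarrow> c $ i = 0) \<and> c $ (N - 1) = 1 \<and> (\<forall>i<l. c $ i = 0))"
proof -
  have s0: "semi_idempotent N C \<and> srk N C = l" if c0: "\<forall>i. p \<le> i \<longrightarrow> i < N \<longrightarrow> c $ i = 0"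
  proof -
    note r = rank_S0[OF c0]
    have "semi_idempotent N C" unfolding semi_idem_iff[OF C_carrier] using conjunct1[OF r] by blast
    moreover have "srk N C = l" using srk_eq[OF C_carrier conjunct1[OF r]] conjunct2[OF r] by (rule trans)
    ultimately show ?thesis by blast
  qed
  have s1: "semi_idempotent N C \<and> srk N C = l + 1"
    if c1: "(\<forall>i. p \<le> i \<longrightarrow> i < N - 1 \<longrightarrow> c $ i = 0) \<and> c $ (N - 1) = 1 \<and> (\<forall>i<l. c $ i = 0)"
  proof -
    have G0: "\<forall>i. p \<le> i \<longrightarrow> i < N - 1 \<longrightarrow> c $ i = 0" and cN: "c $ (N - 1) = 1" and ct: "\<forall>i<l. c $ i = 0"
      using c1 by blast+
    note r = rank_S1[OF G0 cN ct]
    have "semi_idempotent N C" unfolding semi_idem_iff[OF C_carrier] using conjunct1[OF r] by blast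
    moreover have "srk N C = l + 1" using srk_eq[OF C_carrier conjunct1[OF r]] conjunct2[OF r] by (rule trans)
    ultimately show ?thesis by blast
  qed
  have nec: "(\<forall>i. p \<le> i \<longrightarrow> i < N \<longrightarrow> c $ i = 0) \<or>
    ((\<forall>i. p \<le> i \<longrightarrow> i < N - 1 \<longrightarrow> c $ i = 0) \<and> c $ (N - 1) = 1 \<and> (\<forall>i<l. c $ i = 0))"
    if si: "semi_idempotent N C"
  proof -
    obtain k where "C ^\<^sub>m Suc k = C ^\<^sub>m k" using si unfolding semi_idem_iff[OF C_carrier] by blast
    then show ?thesis by (rule necessity)
  qed
  show "(semi_idempotent N C \<and> srk N C = l) \<longleftrightarrow> (\<forall>i. p \<le> i \<longrightarrow> i < N \<longrightarrow> c $ i = 0)"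
  proof
    assume a: "semi_idempotent N C \<and> srk N C = l"
    show "\<forall>i. p \<le> i \<longrightarrow> i < N \<longrightarrow> c $ i = 0"
    proof (rule ccontr)
      assume "\<not> (\<forall>i. p \<le> i \<longrightarrow> i < N \<longrightarrow> c $ i = 0)"
      then have "srk N C = l + 1" using nec[of] a s1 by blast
      then show False using a by simp
    qed
  qed (rule s0)
  show "(semi_idempotent N C \<and> srk N C = l + 1) \<longleftrightarrow>
    ((\<forall>i. p \<le> i \<longrightarrow> i < N - 1 \<longrightarrow> c $ i = 0) \<and> c $ (N - 1) = 1 \<and> (\<forall>i<l. c $ i = 0))"
  proof
    assume a: "semi_idempotent N C \<and> srk N C = l + 1"
    show "(\<forall>i. p \<le> i \<longrightarrow> i < N - 1 \<longrightarrow> c $ i = 0) \<and> c $ (N - 1) = 1 \<and> (\<forall>i<l. c $ i = 0)"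
    proof (rule ccontr)
      assume "\<not> ((\<forall>i. p \<le> i \<longrightarrow> i < N - 1 \<longrightarrow> c $ i = 0) \<and> c $ (N - 1) = 1 \<and> (\<forall>i<l. c $ i = 0))"
      then have "srk N C = l" using nec a s0 by blast
      then show False using a by simp
    qed
  qed (rule s1)
qed

end

theorem lemma3p2:
  fixes l :: nat and rs :: "nat list"
  defines "N \<equiv> l + sum_list rs"
  defines "A' \<equiv> (A_prime l rs :: 'a::{field, finite} mat)"
  assumes pos: "\<forall>r\<in>set rs. 0 < r"
    and nonempty: "rs \<noteq> []"
  shows "(e_count N A' (srk N A') = card (UNIV :: 'a set) ^ srk N A' * e_count N A' (srk N A' + 1)) \<and>
      (last rs > 1 \<longrightarrow>
      e_count2 N A' (mrank N A') (srk N A') = card (UNIV :: 'a set) ^ srk N A' * e_count2 N A' (mrank N A') (srk N A' + 1))"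
proof -
  let ?lcr = "last_col_repl N A'"
  let ?p = "l + sum_list rs - last rs"
  have A'c: "A' \<in> carrier_mat N N" unfolding A'_def N_def by (rule Ap_carrier[OF pos])
  have LCC: "LC l rs C" if "C \<in> ?lcr" for C
    unfolding LC_def using pos nonempty that unfolding N_def A'_def by blast
  have A'lcr: "A' \<in> ?lcr" unfolding last_col_repl_def using A'c by simp
  note LA = LCC[OF A'lcr]
  have cdef: "LC.c l rs C = col C (N - 1)" if "C \<in> ?lcr" for C
    using LC.c_def[OF LCC[OF that]] unfolding N_def .
  have lN: "l < N" "0 < N" using LC.lN[OF LA] LC.N1[OF LA] unfolding N_def by auto
  have pN: "l \<le> ?p" "?p \<le> N - 1" using LC.lp[OF LA] LC.pN[OF LA] unfolding N_def by auto
  have A'0: "col A' (N - 1) = 0\<^sub>v N"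
  proof (rule eq_vecI)
    fix i assume "i < dim_vec (0\<^sub>v N :: 'a vec)"
    then have i: "i < N" by simp
    have e: "(A_prime l rs :: 'a mat) $$ (i, N - 1) = (if i < l then (if i = N - 1 then 1 else 0)
      else if i = Suc (N - 1) \<and> \<not> isst rs (i - l) then 1 else 0)"
      by (rule Ap_entry[OF pos nonempty]) (use i lN in \<open>simp_all add: N_def\<close>)
    have "A' $$ (i, N - 1) = 0" unfolding A'_def e using i lN by auto
    then show "col A' (N - 1) $ i = 0\<^sub>v N $ i" using i A'c lN by simp
  qed (use A'c lN in simp)
  define S0 where "S0 v \<longleftrightarrow> (\<forall>i. ?p \<le> i \<longrightarrow> i < N \<longrightarrow> v $ i = (0::'a))" for v :: "'a vec"
  define S1 where "S1 v \<longleftrightarrow> (\<forall>i. ?p \<le> i \<longrightarrow> i < N - 1 \<longrightarrow> v $ i = (0::'a)) \<and> v $ (N - 1) = 1 \<and> (\<forall>i<l. v $ i = 0)"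
    for v :: "'a vec"
  define Rc where "Rc v \<longleftrightarrow> (\<forall>i. l \<le> i \<longrightarrow> i < N \<longrightarrow> isst rs (i - l) \<longrightarrow> v $ i = (0::'a))" for v :: "'a vec"
  have cl0: "(semi_idempotent N C \<and> srk N C = l) \<longleftrightarrow> S0 (col C (N - 1))" if "C \<in> ?lcr" for C
    using LC.classify_S0[OF LCC[OF that]] unfolding cdef[OF that] S0_def N_def .
  have cl1: "(semi_idempotent N C \<and> srk N C = l + 1) \<longleftrightarrow> S1 (col C (N - 1))" if "C \<in> ?lcr" for C
    using LC.classify_S1[OF LCC[OF that]] unfolding cdef[OF that] S1_def N_def .
  have rk: "mrank N C = card (LC.Ic l rs) + (if Rc (col C (N - 1)) then 0 else 1)" if "C \<in> ?lcr" for C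
    using LC.rank_C[OF LCC[OF that]] unfolding cdef[OF that] Rc_def N_def .
  have srkA: "srk N A' = l" using cl0[OF A'lcr] A'0 unfolding S0_def by simp
  have rkA: "mrank N A' = card (LC.Ic l rs)" using rk[OF A'lcr] A'0 unfolding Rc_def by simp
  have rkC: "mrank N C = mrank N A' \<longleftrightarrow> Rc (col C (N - 1))" if "C \<in> ?lcr" for C
    using rk[OF that] rkA by simp
  have e0: "e_count N A' l = card {v \<in> carrier_vec N. S0 v}"
  proof -
    have "{C \<in> ?lcr. semi_idempotent N C \<and> srk N C = l} = {C \<in> ?lcr. S0 (col C (N - 1))}"
      using cl0 srkA by blast
    then show ?thesis unfolding e_count_def using count_lcr[OF A'c lN(2), of S0] by simp
  qed
  have e1: "e_count N A' (l + 1) = card {v \<in> carrier_vec N. S1 v}"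
  proof -
    have "{C \<in> ?lcr. semi_idempotent N C \<and> srk N C = l + 1} = {C \<in> ?lcr. S1 (col C (N - 1))}"
      using cl1 srkA by blast
    then show ?thesis unfolding e_count_def using count_lcr[OF A'c lN(2), of S1] by simp
  qed
  define G0 where "G0 v \<longleftrightarrow> (\<forall>i. ?p \<le> i \<longrightarrow> i < N - 1 \<longrightarrow> v $ i = (0::'a))" for v :: "'a vec"
  have G0dep: "G0 v = G0 w" if "\<forall>i. l \<le> i \<longrightarrow> i < N - 1 \<longrightarrow> v $ i = w $ i" for v w
    using that pN unfolding G0_def by auto
  have S0eq: "S0 v \<longleftrightarrow> G0 v \<and> v $ (N - 1) = 0" for v
    unfolding S0_def G0_def using pN lN by (metis diff_Suc_1 less_Suc_eq Suc_pred)
  have S1eq: "S1 v \<longleftrightarrow> G0 v \<and> (\<forall>i<l. v $ i = 0) \<and> v $ (N - 1) = 1" for v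
    unfolding S1_def G0_def by blast
  have partA: "e_count N A' (srk N A') = card (UNIV :: 'a set) ^ srk N A' * e_count N A' (srk N A' + 1)"
    unfolding srkA e0 e1 S0eq S1eq by (rule count_vec[OF lN(1) G0dep])
  have partB: "e_count2 N A' (mrank N A') (srk N A') = card (UNIV :: 'a set) ^ srk N A' * e_count2 N A' (mrank N A') (srk N A' + 1)"
    if r1: "last rs > 1"
  proof -
    have pl: "?p < N - 1" using r1 LC.last_le[OF LA] lN unfolding N_def by linarith
    have nst: "\<not> isst rs (N - 1 - l)"
      by (rule LC.notst[OF LA]) (use pl lN in \<open>simp_all add: N_def\<close>)
    define G where "G v \<longleftrightarrow> G0 v \<and> Rc v" for v
    have Gdep: "G v = G w" if h: "\<forall>i. l \<le> i \<longrightarrow> i < N - 1 \<longrightarrow> v $ i = w $ i" for v w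
    proof -
      have "Rc v = Rc w"
      proof -
        have "(\<forall>i. l \<le> i \<longrightarrow> i < N \<longrightarrow> isst rs (i - l) \<longrightarrow> v $ i = 0) \<longleftrightarrow>
          (\<forall>i. l \<le> i \<longrightarrow> i < N \<longrightarrow> isst rs (i - l) \<longrightarrow> w $ i = 0)"
        proof -
          have "i < N - 1" if "l \<le> i" "i < N" "isst rs (i - l)" for i
            using that nst by (cases "i = N - 1") auto
          then show ?thesis using h by metis
        qed
        then show ?thesis unfolding Rc_def .
      qed
      then show ?thesis unfolding G_def using G0dep[OF h] by simp
    qed
    have e20: "e_count2 N A' (mrank N A') l = card {v \<in> carrier_vec N. G v \<and> v $ (N - 1) = 0}"
    proof -
      have "{C \<in> ?lcr. semi_idempotent N C \<and> mrank N C = mrank N A' \<and> srk N C = l} =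
        {C \<in> ?lcr. (\<lambda>v. G v \<and> v $ (N - 1) = 0) (col C (N - 1))}"
        using cl0 rkC srkA S0eq unfolding G_def by blast
      then show ?thesis unfolding e_count2_def using count_lcr[OF A'c lN(2), of "\<lambda>v. G v \<and> v $ (N - 1) = 0"] by simp
    qed
    have e21: "e_count2 N A' (mrank N A') (l + 1) =
      card {v \<in> carrier_vec N. G v \<and> (\<forall>i<l. v $ i = 0) \<and> v $ (N - 1) = 1}"
    proof -
      have "{C \<in> ?lcr. semi_idempotent N C \<and> mrank N C = mrank N A' \<and> srk N C = l + 1} =
        {C \<in> ?lcr. (\<lambda>v. G v \<and> (\<forall>i<l. v $ i = 0) \<and> v $ (N - 1) = 1) (col C (N - 1))}"
        using cl1 rkC srkA S1eq unfolding G_def by blast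
      then show ?thesis unfolding e_count2_def
        using count_lcr[OF A'c lN(2), of "\<lambda>v. G v \<and> (\<forall>i<l. v $ i = 0) \<and> v $ (N - 1) = 1"] by simp
    qed
    show ?thesis unfolding srkA e20 e21 by (rule count_vec[OF lN(1) Gdep])
  qed
  show ?thesis using partA partB by blast
qed

end
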